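(* Let $(u_\beta)_{\beta<\alpha}$ be a non-increasing (for $\le_{lex}$) sequence of prime words. If $\alpha\ge2$, then the product $\prod_{\beta<\alpha}u_\beta$ is not prime.
   Context: $A$ is a finite alphabet with a linear order $<_A$. Words are sequences of letters indexed by countable ordinals; $\prod$ is ordered concatenation and $x^\alpha$ the concatenation of $\alpha$ copies of $x$. A suffix of $x$ is $x[\gamma,|x|)$, proper if $0<\gamma<|x|$. Write $x<_{str}x'$ if there are letters $a<_Ab$ and words $y,z,z'$ with $x=yaz$, $x'=ybz'$; $x\le_{lex}x'$ iff $x$ is a prefix of $x'$ or $x<_{str}x'$. A word is primitive if $x=y^\alpha$ implies $\alpha=1$ and $y=x$; $w$ is prime if it is primitive and every proper suffix $z$ satisfies $w\le_{lex}z$. A sequence is non-increasing if $\beta<\beta'$ implies $u_\beta\ge_{lex}u_{\beta'}$. *)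

theory Defs
  imports Main "HOL-Library.Nat_Bijection"
begin

text \<open>A word is a pair (r, f): r is a well-order (in the sense of Well_order, i.e. a
reflexive linear well-order on Field r) on a set of positions in nat (so the length,
the order type of r, is a countable ordinal), and f labels positions with letters.
Words are identified up to label-preserving order isomorphism (word_iso).\<close>

type_synonym 'a word = "nat rel \<times> (nat \<Rightarrow> 'a)"

definition wword :: "'a word \<Rightarrow> bool" where
  "wword w \<longleftrightarrow> Well_order (fst w)"

definition word_iso :: "'a word \<Rightarrow> 'a word \<Rightarrow> bool" (infix "\<simeq>w" 50) where
  "x \<simeq>w y \<longleftrightarrow> (\<exists>h. bij_betw h (Field (fst x)) (Field (fst y))
      \<and> (\<forall>p\<in>Field (fst x). \<forall>q\<in>Field (fst x). (p, q) \<in> fst x \<longleftrightarrow> (h p, h q) \<in> fst y)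
      \<and> (\<forall>p\<in>Field (fst x). snd y (h p) = snd x p))"

definition letter :: "'a \<Rightarrow> 'a word" where
  "letter a = ({(0, 0)}, \<lambda>_. a)"

definition wconc :: "'a word \<Rightarrow> 'a word \<Rightarrow> 'a word" (infixr "\<cdot>w" 65) where
  "x \<cdot>w y = (
     {(2*p, 2*p') | p p'. (p, p') \<in> fst x}
   \<union> {(2*q+1, 2*q'+1) | q q'. (q, q') \<in> fst y}
   \<union> {(2*p, 2*q+1) | p q. p \<in> Field (fst x) \<and> q \<in> Field (fst y)},
     \<lambda>n. if even n then snd x (n div 2) else snd y (n div 2))"

text \<open>Ordered product of a sequence (u i) indexed by a well-order I on nat
(a countable ordinal): positions are prod_encode (i, p), ordered lexicographically.\<close>
definition wprod :: "nat rel \<Rightarrow> (nat \<Rightarrow> 'a word) \<Rightarrow> 'a word" where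
  "wprod I u = (
     {(prod_encode (i, p), prod_encode (j, q)) | i j p q.
        i \<in> Field I \<and> j \<in> Field I \<and> p \<in> Field (fst (u i)) \<and> q \<in> Field (fst (u j)) \<and>
        ((i \<noteq> j \<and> (i, j) \<in> I) \<or> (i = j \<and> (p, q) \<in> fst (u i)))},
     \<lambda>n. snd (u (fst (prod_decode n))) (snd (prod_decode n)))"

definition wpow :: "'a word \<Rightarrow> nat rel \<Rightarrow> 'a word" where
  "wpow x I = wprod I (\<lambda>_. x)"

definition str_less :: "('a::linorder) word \<Rightarrow> 'a word \<Rightarrow> bool" where
  "str_less x x' \<longleftrightarrow> (\<exists>y a b z z'. wword y \<and> wword z \<and> wword z' \<and> a < b \<and>
      x \<simeq>w (y \<cdot>w letter a \<cdot>w z) \<and> x' \<simeq>w (y \<cdot>w letter b \<cdot>w z'))"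

definition wprefix :: "'a word \<Rightarrow> 'a word \<Rightarrow> bool" where
  "wprefix x x' \<longleftrightarrow> (\<exists>z. wword z \<and> x' \<simeq>w (x \<cdot>w z))"

definition lex_le :: "('a::linorder) word \<Rightarrow> 'a word \<Rightarrow> bool" where
  "lex_le x x' \<longleftrightarrow> wprefix x x' \<or> str_less x x'"

definition primitive :: "'a word \<Rightarrow> bool" where
  "primitive x \<longleftrightarrow> wword x \<and> (\<forall>y I. wword y \<and> Well_order I \<and> x \<simeq>w wpow y I \<longrightarrow>
      card (Field I) = 1 \<and> y \<simeq>w x)"

text \<open>Proper suffixes z of w are exactly those with w = y z, y and z nonempty
(z = w[gamma,|w|) with 0 < gamma < |w|).\<close>
definition prime_word :: "('a::linorder) word \<Rightarrow> bool" where
  "prime_word w \<longleftrightarrow> primitive w \<and>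
     (\<forall>y z. wword y \<and> wword z \<and> Field (fst y) \<noteq> {} \<and> Field (fst z) \<noteq> {} \<and>
        w \<simeq>w (y \<cdot>w z) \<longrightarrow> lex_le w z)"

end

theory Submission
  imports Defs
begin


lemma wo_refl: "Well_order r \<Longrightarrow> a \<in> Field r \<Longrightarrow> (a,a) \<in> r"
  by (simp add: well_order_on_def linear_order_on_def partial_order_on_def preorder_on_def refl_on_def)
lemma wo_trans: "Well_order r \<Longrightarrow> (a,b) \<in> r \<Longrightarrow> (b,c) \<in> r \<Longrightarrow> (a,c) \<in> r"
  unfolding well_order_on_def linear_order_on_def partial_order_on_def preorder_on_def
  by (meson transD)
lemma wo_antisym: "Well_order r \<Longrightarrow> (a,b) \<in> r \<Longrightarrow> (b,a) \<in> r \<Longrightarrow> a = b"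
  unfolding well_order_on_def linear_order_on_def partial_order_on_def preorder_on_def
  by (meson antisymD)
lemma wo_total: "Well_order r \<Longrightarrow> a \<in> Field r \<Longrightarrow> b \<in> Field r \<Longrightarrow> (a,b) \<in> r \<or> (b,a) \<in> r"
  unfolding well_order_on_def linear_order_on_def total_on_def
  by (metis refl_on_def partial_order_on_def preorder_on_def)
lemma wo_wf: "Well_order r \<Longrightarrow> wf (r - Id)"
  unfolding well_order_on_def by simp



definition subw :: "'a word \<Rightarrow> nat set \<Rightarrow> 'a word" where
  "subw x A = (Restr (fst x) A, snd x)"
definition usw :: "'a word \<Rightarrow> nat \<Rightarrow> nat set" where
  "usw x a = {b. (b,a) \<in> fst x \<and> b \<noteq> a}"
definition ini :: "'a word \<Rightarrow> nat set \<Rightarrow> bool" where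
  "ini x A \<longleftrightarrow> A \<subseteq> Field (fst x) \<and> (\<forall>a\<in>A. \<forall>b. (b,a) \<in> fst x \<longrightarrow> b \<in> A)"
definition isoW :: "(nat \<Rightarrow> nat) \<Rightarrow> 'a word \<Rightarrow> 'a word \<Rightarrow> bool" where
  "isoW h x y \<longleftrightarrow> bij_betw h (Field (fst x)) (Field (fst y))
      \<and> (\<forall>p\<in>Field (fst x). \<forall>q\<in>Field (fst x). (p, q) \<in> fst x \<longleftrightarrow> (h p, h q) \<in> fst y)
      \<and> (\<forall>p\<in>Field (fst x). snd y (h p) = snd x p)"

lemma word_iso_iff: "x \<simeq>w y \<longleftrightarrow> (\<exists>h. isoW h x y)"
  by (simp add: word_iso_def isoW_def)

lemma isoW_id: "isoW id x x"
  by (simp add: isoW_def)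

lemma isoW_inv:
  assumes "isoW h x y" shows "isoW (inv_into (Field (fst x)) h) y x"
proof -
  let ?g = "inv_into (Field (fst x)) h"
  have b: "bij_betw h (Field (fst x)) (Field (fst y))" using assms by (simp add: isoW_def)
  have b2: "bij_betw ?g (Field (fst y)) (Field (fst x))" using b by (rule bij_betw_inv_into)
  have fx: "\<And>q. q \<in> Field (fst y) \<Longrightarrow> h (?g q) = q" using b
    by (meson bij_betw_inv_into_right)
  have gx: "\<And>q. q \<in> Field (fst y) \<Longrightarrow> ?g q \<in> Field (fst x)" using b2
    by (meson bij_betwE)
  show ?thesis unfolding isoW_def
  proof (intro conjI ballI)
    show "bij_betw ?g (Field (fst y)) (Field (fst x))" by (fact b2)
  next
    fix p q assume "p \<in> Field (fst y)" "q \<in> Field (fst y)"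
    then show "(p, q) \<in> fst y \<longleftrightarrow> (?g p, ?g q) \<in> fst x"
      using assms unfolding isoW_def using fx gx by metis
  next
    fix p assume "p \<in> Field (fst y)"
    then show "snd x (?g p) = snd y p"
      using assms unfolding isoW_def using fx gx by metis
  qed
qed

lemma isoW_comp:
  assumes "isoW f x y" "isoW g y z" shows "isoW (g \<circ> f) x z"
proof -
  have bf: "bij_betw f (Field (fst x)) (Field (fst y))" using assms by (simp add: isoW_def)
  have bg: "bij_betw g (Field (fst y)) (Field (fst z))" using assms by (simp add: isoW_def)
  have fin: "\<And>p. p \<in> Field (fst x) \<Longrightarrow> f p \<in> Field (fst y)" using bf by (meson bij_betwE)
  show ?thesis unfolding isoW_def
  proof (intro conjI ballI)
    show "bij_betw (g \<circ> f) (Field (fst x)) (Field (fst z))" using bf bg by (rule bij_betw_trans)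
  next
    fix p q assume "p \<in> Field (fst x)" "q \<in> Field (fst x)"
    then show "(p, q) \<in> fst x \<longleftrightarrow> ((g \<circ> f) p, (g \<circ> f) q) \<in> fst z"
      using assms fin unfolding isoW_def by simp
  next
    fix p assume "p \<in> Field (fst x)"
    then show "snd z ((g \<circ> f) p) = snd x p"
      using assms fin unfolding isoW_def by simp
  qed
qed

lemma word_iso_refl: "x \<simeq>w x" using isoW_id word_iso_iff by blast
lemma word_iso_sym: "x \<simeq>w y \<Longrightarrow> y \<simeq>w x" using isoW_inv word_iso_iff by blast
lemma word_iso_trans: "x \<simeq>w y \<Longrightarrow> y \<simeq>w z \<Longrightarrow> x \<simeq>w z" by (meson isoW_comp word_iso_iff)

lemma wword_refl: "wword x \<Longrightarrow> a \<in> Field (fst x) \<Longrightarrow> (a,a) \<in> fst x"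
  by (simp add: wword_def wo_refl)

lemma Field_subw: assumes "wword x" "A \<subseteq> Field (fst x)" shows "Field (fst (subw x A)) = A"
proof
  show "Field (fst (subw x A)) \<subseteq> A" unfolding subw_def by (auto simp: Field_def)
  show "A \<subseteq> Field (fst (subw x A))"
  proof
    fix a assume a: "a \<in> A"
    then have "(a,a) \<in> fst (subw x A)" using wword_refl[OF assms(1)] assms(2) by (auto simp: subw_def)
    then show "a \<in> Field (fst (subw x A))" by (auto simp: Field_def)
  qed
qed

lemma Field_subw_le: "Field (fst (subw x A)) \<subseteq> A"
  unfolding subw_def by (auto simp: Field_def)

lemma wword_subw: "wword x \<Longrightarrow> wword (subw x A)"
  unfolding subw_def wword_def by (simp add: Well_order_Restr)

lemma subw_subw: "subw (subw x A) B = subw x (A \<inter> B)"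
  unfolding subw_def by auto

lemma subw_Field: "subw x (Field (fst x)) = x"
  unfolding subw_def by (simp add: Restr_Field)

lemma snd_subw[simp]: "snd (subw x A) = snd x" by (simp add: subw_def)
lemma fst_subw: "fst (subw x A) = Restr (fst x) A" by (simp add: subw_def)

lemma isoW_Field: "isoW f x y \<Longrightarrow> f ` Field (fst x) = Field (fst y)"
  unfolding isoW_def by (simp add: bij_betw_def)

lemma isoW_in: "isoW f x y \<Longrightarrow> p \<in> Field (fst x) \<Longrightarrow> f p \<in> Field (fst y)"
  using isoW_Field by blast

lemma isoW_inj: "isoW f x y \<Longrightarrow> inj_on f (Field (fst x))"
  unfolding isoW_def by (simp add: bij_betw_def)

lemma isoW_rel: "isoW f x y \<Longrightarrow> p \<in> Field (fst x) \<Longrightarrow> q \<in> Field (fst x) \<Longrightarrow> (p, q) \<in> fst x \<longleftrightarrow> (f p, f q) \<in> fst y"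
  unfolding isoW_def by blast

lemma isoW_lab: "isoW f x y \<Longrightarrow> p \<in> Field (fst x) \<Longrightarrow> snd y (f p) = snd x p"
  unfolding isoW_def by blast

lemma isoW_rest:
  assumes "wword x" "wword y" "isoW f x y" "A \<subseteq> Field (fst x)"
  shows "isoW f (subw x A) (subw y (f ` A))"
proof -
  have fa: "f ` A \<subseteq> Field (fst y)" using assms isoW_in by blast
  have F1: "Field (fst (subw x A)) = A" using assms Field_subw by blast
  have F2: "Field (fst (subw y (f ` A))) = f ` A" using assms fa Field_subw by blast
  have inj: "inj_on f A" using isoW_inj[OF assms(3)] assms(4) inj_on_subset by blast
  show ?thesis unfolding isoW_def F1 F2
  proof (intro conjI ballI)
    show "bij_betw f A (f ` A)" using inj by (simp add: bij_betw_def)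
  next
    fix p q assume pq: "p \<in> A" "q \<in> A"
    then show "(p, q) \<in> fst (subw x A) \<longleftrightarrow> (f p, f q) \<in> fst (subw y (f ` A))"
      using isoW_rel[OF assms(3)] assms(4) by (auto simp: fst_subw)
  next
    fix p assume "p \<in> A"
    then show "snd (subw y (f ` A)) (f p) = snd (subw x A) p"
      using isoW_lab[OF assms(3)] assms(4) by auto
  qed
qed

lemma usw_sub_Field: "usw x a \<subseteq> Field (fst x)"
  unfolding usw_def by (auto simp: Field_def)

lemma isoW_usw:
  assumes "isoW f x y" "a \<in> Field (fst x)"
  shows "f ` usw x a = usw y (f a)"
proof
  show "f ` usw x a \<subseteq> usw y (f a)"
  proof
    fix c assume "c \<in> f ` usw x a"
    then obtain b where b: "b \<in> usw x a" "c = f b" by blast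
    have bF: "b \<in> Field (fst x)" using b usw_sub_Field by blast
    have "(f b, f a) \<in> fst y" using b bF assms isoW_rel unfolding usw_def by blast
    moreover have "f b \<noteq> f a" using b bF assms isoW_inj unfolding usw_def inj_on_def by blast
    ultimately show "c \<in> usw y (f a)" using b unfolding usw_def by simp
  qed
next
  show "usw y (f a) \<subseteq> f ` usw x a"
  proof
    fix c assume c: "c \<in> usw y (f a)"
    then have "c \<in> Field (fst y)" using usw_sub_Field by blast
    then obtain b where b: "b \<in> Field (fst x)" "c = f b" using isoW_Field[OF assms(1)] by blast
    have "(b, a) \<in> fst x" using c b assms isoW_rel unfolding usw_def by blast
    moreover have "b \<noteq> a" using c b unfolding usw_def by auto
    ultimately show "c \<in> f ` usw x a" using b unfolding usw_def by blast
  qed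
qed

lemma isoW_ini: "isoW f x y \<Longrightarrow> ini x A \<Longrightarrow> ini y (f ` A)"
  unfolding ini_def
proof (intro conjI ballI allI impI)
  assume a: "isoW f x y" "A \<subseteq> Field (fst x) \<and> (\<forall>a\<in>A. \<forall>b. (b, a) \<in> fst x \<longrightarrow> b \<in> A)"
  then show "f ` A \<subseteq> Field (fst y)" using isoW_in by blast
  fix c d assume c: "c \<in> f ` A" "(d, c) \<in> fst y"
  then obtain a0 where a0: "a0 \<in> A" "c = f a0" by blast
  have "d \<in> Field (fst y)" using c by (auto simp: Field_def)
  then obtain b0 where b0: "b0 \<in> Field (fst x)" "d = f b0" using isoW_Field[OF a(1)] by blast
  have "(b0, a0) \<in> fst x" using a a0 b0 c isoW_rel by blast
  then show "d \<in> f ` A" using a a0 b0 by blast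
qed

lemma usw_ini: assumes "wword x" shows "ini x (usw x a)"
  unfolding ini_def
proof (intro conjI ballI allI impI)
  show "usw x a \<subseteq> Field (fst x)" by (rule usw_sub_Field)
  fix b c assume b: "b \<in> usw x a" and c: "(c, b) \<in> fst x"
  have wo: "Well_order (fst x)" using assms by (simp add: wword_def)
  have ba: "(b,a) \<in> fst x" "b \<noteq> a" using b by (auto simp: usw_def)
  have "(c,a) \<in> fst x" using wo_trans[OF wo c ba(1)] .
  moreover have "c \<noteq> a" using wo_antisym[OF wo] c ba by blast
  ultimately show "c \<in> usw x a" by (simp add: usw_def)
qed

lemma ini_Field: "ini x (Field (fst x))"
  unfolding ini_def by (auto simp: Field_def)

lemma ini_empty: "ini x {}"
  unfolding ini_def by auto

lemma ini_trans: "ini x A \<Longrightarrow> ini (subw x A) B \<Longrightarrow> ini x B"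
  unfolding ini_def fst_subw by (auto simp: Field_def) blast+

lemma ini_in_subw: assumes "ini x B" "B \<subseteq> A" "wword x" "A \<subseteq> Field (fst x)" shows "ini (subw x A) B"
  unfolding ini_def Field_subw[OF assms(3,4)] using assms(1,2) unfolding ini_def fst_subw by blast

lemma ini_chain: assumes "wword x" "ini x A" "ini x B" shows "A \<subseteq> B \<or> B \<subseteq> A"
proof (rule ccontr)
  assume "\<not> (A \<subseteq> B \<or> B \<subseteq> A)"
  then obtain a b where ab: "a \<in> A" "a \<notin> B" "b \<in> B" "b \<notin> A" by blast
  have "a \<in> Field (fst x)" "b \<in> Field (fst x)" using ab assms unfolding ini_def by auto
  then have "(a,b) \<in> fst x \<or> (b,a) \<in> fst x" using wo_total[of "fst x" a b] assms(1) unfolding wword_def by blast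
  then show False using ab assms unfolding ini_def by blast
qed

lemma usw_subw: "usw (subw x A) a = (if a \<in> A then usw x a \<inter> A else {})"
  unfolding usw_def fst_subw by auto

lemma usw_inj: assumes "wword x" "a \<in> Field (fst x)" "b \<in> Field (fst x)" "usw x a = usw x b" shows "a = b"
proof (rule ccontr)
  assume ne: "a \<noteq> b"
  have "(a,b) \<in> fst x \<or> (b,a) \<in> fst x" using wo_total[of "fst x" a b] assms unfolding wword_def by blast
  then have "a \<in> usw x b \<or> b \<in> usw x a" using ne by (auto simp: usw_def)
  then show False using assms(4) by (auto simp: usw_def)
qed

lemma ini_proper:
  assumes "wword x" "ini x A" "A \<noteq> Field (fst x)"
  shows "\<exists>c \<in> Field (fst x) - A. A = usw x c"
proof -
  have "Field (fst x) - A \<noteq> {}" using assms unfolding ini_def by blast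
  then obtain c0 where c0: "c0 \<in> Field (fst x) - A" by blast
  have wf: "wf (fst x - Id)" using wo_wf assms(1) unfolding wword_def by blast
  obtain c where c: "c \<in> Field (fst x) - A" and m: "\<And>y. (y, c) \<in> fst x - Id \<Longrightarrow> y \<notin> Field (fst x) - A"
    using wfE_min[OF wf c0] by metis
  have "A = usw x c"
  proof
    show "A \<subseteq> usw x c"
    proof
      fix a assume a: "a \<in> A"
      have "a \<in> Field (fst x)" using a assms unfolding ini_def by blast
      then have "(a,c) \<in> fst x \<or> (c,a) \<in> fst x" using c assms wo_total[of "fst x" a c] unfolding wword_def by blast
      moreover have "(c,a) \<notin> fst x" using a c assms unfolding ini_def by blast
      ultimately show "a \<in> usw x c" using a c unfolding usw_def by auto
    qed
  next
    show "usw x c \<subseteq> A"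
    proof
      fix b assume b: "b \<in> usw x c"
      then have "b \<in> Field (fst x)" using usw_sub_Field by blast
      then show "b \<in> A" using m[of b] b unfolding usw_def by auto
    qed
  qed
  then show ?thesis using c by blast
qed

lemma rigid:
  assumes "wword x" "ini x A" "ini x B" "isoW f (subw x A) (subw x B)"
  shows "A = B"
proof -
  have AF: "A \<subseteq> Field (fst x)" "B \<subseteq> Field (fst x)" using assms unfolding ini_def by auto
  have FA: "Field (fst (subw x A)) = A" "Field (fst (subw x B)) = B"
    using Field_subw[OF assms(1) AF(1)] Field_subw[OF assms(1) AF(2)] by auto
  have fix1: "\<forall>a\<in>A. f a = a"
  proof (rule ccontr)
    assume "\<not> (\<forall>a\<in>A. f a = a)"
    then obtain a0 where a0: "a0 \<in> {a\<in>A. f a \<noteq> a}" by blast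
    have wf: "wf (fst x - Id)" using wo_wf assms(1) unfolding wword_def by blast
    obtain a where a: "a \<in> {a\<in>A. f a \<noteq> a}" and m: "\<And>y. (y, a) \<in> fst x - Id \<Longrightarrow> y \<notin> {a\<in>A. f a \<noteq> a}"
      by (rule wfE_min[OF wf a0]) blast
    have a: "a \<in> A" "f a \<noteq> a" using a by auto
    have fa: "f a \<in> B" using a FA isoW_in[OF assms(4)] by auto
    have u1: "usw (subw x A) a = usw x a" using a assms(2) by (auto simp: ini_def usw_def fst_subw)
    have u2: "usw (subw x B) (f a) = usw x (f a)" using fa assms(3) by (auto simp: ini_def usw_def fst_subw)
    have "f ` usw x a = usw x (f a)" using isoW_usw[OF assms(4)] a FA u1 u2 by metis
    moreover have "f ` usw x a = usw x a"
    proof -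
      have "\<forall>b \<in> usw x a. f b = b"
      proof
        fix b assume b: "b \<in> usw x a"
        then have "b \<in> A" using assms(2) a unfolding ini_def usw_def by blast
        then show "f b = b" using m[of b] b unfolding usw_def by auto
      qed
      then show ?thesis by force
    qed
    ultimately have "usw x a = usw x (f a)" by simp
    then have "a = f a" using usw_inj assms(1) AF a fa by blast
    then show False using a by simp
  qed
  have "f ` A = B" using isoW_Field[OF assms(4)] FA by simp
  then show ?thesis using fix1 by force
qed



lemma isoW_rest2:
  assumes "wword x" "isoW f x y" "A \<subseteq> Field (fst x)"
  shows "isoW f (subw x A) (subw y (f ` A))"
proof -
  have fa: "f ` A \<subseteq> Field (fst y)" using assms isoW_in by blast
  have F1: "Field (fst (subw x A)) = A" using assms Field_subw by blast
  have F2: "Field (fst (subw y (f ` A))) = f ` A"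
  proof
    show "Field (fst (subw y (f ` A))) \<subseteq> f ` A" by (rule Field_subw_le)
    show "f ` A \<subseteq> Field (fst (subw y (f ` A)))"
    proof
      fix c assume "c \<in> f ` A"
      then obtain a where a: "a \<in> A" "c = f a" by blast
      have "(a,a) \<in> fst x" using a assms wword_refl by blast
      then have "(c,c) \<in> fst y" using a assms isoW_rel by blast
      then have "(c,c) \<in> fst (subw y (f ` A))" using a by (auto simp: fst_subw)
      then show "c \<in> Field (fst (subw y (f ` A)))" by (auto simp: Field_def)
    qed
  qed
  have inj: "inj_on f A" using isoW_inj[OF assms(2)] assms(3) inj_on_subset by blast
  show ?thesis unfolding isoW_def F1 F2
  proof (intro conjI ballI)
    show "bij_betw f A (f ` A)" using inj by (simp add: bij_betw_def)
  next
    fix p q assume pq: "p \<in> A" "q \<in> A"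
    then show "(p, q) \<in> fst (subw x A) \<longleftrightarrow> (f p, f q) \<in> fst (subw y (f ` A))"
      using isoW_rel[OF assms(2)] assms(3) by (auto simp: fst_subw)
  next
    fix p assume "p \<in> A"
    then show "snd (subw y (f ` A)) (f p) = snd (subw x A) p"
      using isoW_lab[OF assms(2)] assms(3) by auto
  qed
qed

lemma rel_wconc: "(m,n) \<in> fst (y \<cdot>w z) \<longleftrightarrow>
   (even m \<and> even n \<and> (m div 2, n div 2) \<in> fst y) \<or> (odd m \<and> odd n \<and> (m div 2, n div 2) \<in> fst z)
   \<or> (even m \<and> odd n \<and> m div 2 \<in> Field (fst y) \<and> n div 2 \<in> Field (fst z))"
proof
  assume "(m,n) \<in> fst (y \<cdot>w z)"
  then show "(even m \<and> even n \<and> (m div 2, n div 2) \<in> fst y) \<or> (odd m \<and> odd n \<and> (m div 2, n div 2) \<in> fst z)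
   \<or> (even m \<and> odd n \<and> m div 2 \<in> Field (fst y) \<and> n div 2 \<in> Field (fst z))"
    unfolding wconc_def by auto
next
  assume h: "(even m \<and> even n \<and> (m div 2, n div 2) \<in> fst y) \<or> (odd m \<and> odd n \<and> (m div 2, n div 2) \<in> fst z)
   \<or> (even m \<and> odd n \<and> m div 2 \<in> Field (fst y) \<and> n div 2 \<in> Field (fst z))"
  have e: "even k \<Longrightarrow> k = 2 * (k div 2)" for k :: nat by simp
  have o: "odd k \<Longrightarrow> k = 2 * (k div 2) + 1" for k :: nat by simp
  from h show "(m,n) \<in> fst (y \<cdot>w z)"
  proof (elim disjE conjE)
    assume "even m" "even n" "(m div 2, n div 2) \<in> fst y"
    then show ?thesis unfolding wconc_def using e[of m] e[of n] by (simp, blast)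
  next
    assume a: "odd m" "odd n" "(m div 2, n div 2) \<in> fst z"
    show ?thesis unfolding wconc_def fst_conv
      apply (rule UnI1, rule UnI2)
      apply (rule CollectI)
      apply (rule exI[of _ "m div 2"], rule exI[of _ "n div 2"])
      using o[of m] o[of n] a by simp
  next
    assume a: "even m" "odd n" "m div 2 \<in> Field (fst y)" "n div 2 \<in> Field (fst z)"
    show ?thesis unfolding wconc_def fst_conv
      apply (rule UnI2)
      apply (rule CollectI)
      apply (rule exI[of _ "m div 2"], rule exI[of _ "n div 2"])
      using e[of m] o[of n] a by simp
  qed
qed

lemma rel_wconc_ee[simp]: "(2*p, 2*q) \<in> fst (y \<cdot>w z) \<longleftrightarrow> (p,q) \<in> fst y"
  by (simp add: rel_wconc)
lemma rel_wconc_oo[simp]: "(Suc (2*p), Suc (2*q)) \<in> fst (y \<cdot>w z) \<longleftrightarrow> (p,q) \<in> fst z"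
  by (simp add: rel_wconc)
lemma rel_wconc_eo[simp]: "(2*p, Suc (2*q)) \<in> fst (y \<cdot>w z) \<longleftrightarrow> p \<in> Field (fst y) \<and> q \<in> Field (fst z)"
  by (simp add: rel_wconc)
lemma rel_wconc_oe[simp]: "(Suc (2*p), 2*q) \<notin> fst (y \<cdot>w z)"
  by (simp add: rel_wconc)

lemma Field_wconc: "Field (fst (y \<cdot>w z)) = (\<lambda>p. 2*p) ` Field (fst y) \<union> (\<lambda>q. 2*q+1) ` Field (fst z)"
proof
  show "Field (fst (y \<cdot>w z)) \<subseteq> (\<lambda>p. 2*p) ` Field (fst y) \<union> (\<lambda>q. 2*q+1) ` Field (fst z)"
    unfolding wconc_def Field_def by auto
  show "(\<lambda>p. 2*p) ` Field (fst y) \<union> (\<lambda>q. 2*q+1) ` Field (fst z) \<subseteq> Field (fst (y \<cdot>w z))"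
  proof
    fix n assume "n \<in> (\<lambda>p. 2*p) ` Field (fst y) \<union> (\<lambda>q. 2*q+1) ` Field (fst z)"
    then show "n \<in> Field (fst (y \<cdot>w z))"
    proof
      assume "n \<in> (\<lambda>p. 2*p) ` Field (fst y)"
      then obtain p where p: "p \<in> Field (fst y)" "n = 2*p" by blast
      then obtain p' where "(p,p') \<in> fst y \<or> (p',p) \<in> fst y" by (auto simp: Field_def)
      then have "(2*p,2*p') \<in> fst (y \<cdot>w z) \<or> (2*p',2*p) \<in> fst (y \<cdot>w z)" by simp
      then show ?thesis using p by (meson FieldI1 FieldI2)
    next
      assume "n \<in> (\<lambda>q. 2*q+1) ` Field (fst z)"
      then obtain p where p: "p \<in> Field (fst z)" "n = Suc (2*p)" by auto
      then obtain p' where "(p,p') \<in> fst z \<or> (p',p) \<in> fst z" by (auto simp: Field_def)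
      then have "(Suc (2*p),Suc (2*p')) \<in> fst (y \<cdot>w z) \<or> (Suc (2*p'),Suc (2*p)) \<in> fst (y \<cdot>w z)" by simp
      then show ?thesis using p by (meson FieldI1 FieldI2)
    qed
  qed
qed

lemma snd_wconc: "snd (y \<cdot>w z) n = (if even n then snd y (n div 2) else snd z (n div 2))"
  unfolding wconc_def by simp

lemma conc_left:
  assumes refl: "\<forall>n\<in>E. (n,n) \<in> fst (y \<cdot>w z)" and E: "E = (\<lambda>p. 2*p) ` Field (fst y)"
  shows "isoW (\<lambda>n. n div 2) (subw (y \<cdot>w z) E) y"
proof -
  have FE: "Field (fst (subw (y \<cdot>w z) E)) = E"
  proof
    show "Field (fst (subw (y \<cdot>w z) E)) \<subseteq> E" by (rule Field_subw_le)
    show "E \<subseteq> Field (fst (subw (y \<cdot>w z) E))" using refl by (auto simp: fst_subw Field_def)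
  qed
  show ?thesis unfolding isoW_def FE
  proof (intro conjI ballI)
    show "bij_betw (\<lambda>n. n div 2) E (Field (fst y))" unfolding E bij_betw_def inj_on_def by (auto simp: image_image)
  next
    fix p q assume "p \<in> E" "q \<in> E"
    then show "(p, q) \<in> fst (subw (y \<cdot>w z) E) \<longleftrightarrow> (p div 2, q div 2) \<in> fst y"
      unfolding E fst_subw by auto
  next
    fix p assume "p \<in> E"
    then show "snd y (p div 2) = snd (subw (y \<cdot>w z) E) p" unfolding E by (auto simp: snd_wconc)
  qed
qed

lemma conc_right:
  assumes refl: "\<forall>n\<in>E. (n,n) \<in> fst (y \<cdot>w z)" and E: "E = (\<lambda>p. 2*p+1) ` Field (fst z)"
  shows "isoW (\<lambda>n. n div 2) (subw (y \<cdot>w z) E) z"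
proof -
  have FE: "Field (fst (subw (y \<cdot>w z) E)) = E"
  proof
    show "Field (fst (subw (y \<cdot>w z) E)) \<subseteq> E" by (rule Field_subw_le)
    show "E \<subseteq> Field (fst (subw (y \<cdot>w z) E))" using refl by (auto simp: fst_subw Field_def)
  qed
  show ?thesis unfolding isoW_def FE
  proof (intro conjI ballI)
    show "bij_betw (\<lambda>n. n div 2) E (Field (fst z))" unfolding E bij_betw_def inj_on_def by (auto simp: image_image)
  next
    fix p q assume "p \<in> E" "q \<in> E"
    then show "(p, q) \<in> fst (subw (y \<cdot>w z) E) \<longleftrightarrow> (p div 2, q div 2) \<in> fst z"
      unfolding E fst_subw by auto
  next
    fix p assume "p \<in> E"
    then show "snd z (p div 2) = snd (subw (y \<cdot>w z) E) p" unfolding E by (auto simp: snd_wconc)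
  qed
qed



lemma conc_iff_1:
  assumes wx: "wword x" and h: "isoW h x (y \<cdot>w z)"
  shows "\<exists>A. ini x A \<and> subw x A \<simeq>w y \<and> subw x (Field (fst x) - A) \<simeq>w z"
proof -
  let ?c = "y \<cdot>w z"
  let ?Fx = "Field (fst x)"
  define A where "A = {a \<in> ?Fx. even (h a)}"
  define E where "E = (\<lambda>p. 2*p) ` Field (fst y)"
  define Od where "Od = (\<lambda>p. 2*p+1) ` Field (fst z)"
  have Fc: "Field (fst ?c) = E \<union> Od" unfolding E_def Od_def by (rule Field_wconc)
  have hF: "h ` ?Fx = E \<union> Od" using isoW_Field[OF h] Fc by simp
  have reflc: "\<forall>n\<in>Field (fst ?c). (n,n) \<in> fst ?c"
  proof
    fix n assume "n \<in> Field (fst ?c)"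
    then obtain a where a: "a \<in> ?Fx" "n = h a" using isoW_Field[OF h] by blast
    have "(a,a) \<in> fst x" using a wx wword_refl by blast
    then show "(n,n) \<in> fst ?c" using a isoW_rel[OF h] by blast
  qed
  have Ee: "\<And>n. n \<in> E \<Longrightarrow> even n" unfolding E_def by auto
  have Oo: "\<And>n. n \<in> Od \<Longrightarrow> odd n" unfolding Od_def by auto
  have hA: "h ` A = E"
  proof
    show "h ` A \<subseteq> E" using hF Oo unfolding A_def by blast
    show "E \<subseteq> h ` A"
    proof
      fix e assume e: "e \<in> E"
      then obtain a where "a \<in> ?Fx" "h a = e" using hF by (metis UnI1 imageE)
      then show "e \<in> h ` A" using Ee e unfolding A_def by blast
    qed
  qed
  have hB: "h ` (?Fx - A) = Od"
  proof
    show "h ` (?Fx - A) \<subseteq> Od" using hF Ee unfolding A_def by blast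
    show "Od \<subseteq> h ` (?Fx - A)"
    proof
      fix e assume e: "e \<in> Od"
      then obtain a where "a \<in> ?Fx" "h a = e" using hF by (metis UnI2 imageE)
      then show "e \<in> h ` (?Fx - A)" using Oo e unfolding A_def by blast
    qed
  qed
  have AF: "A \<subseteq> ?Fx" unfolding A_def by blast
  have ini: "ini x A"
    unfolding ini_def
  proof (intro conjI ballI allI impI)
    show "A \<subseteq> ?Fx" by (fact AF)
    fix a b assume a: "a \<in> A" and ba: "(b,a) \<in> fst x"
    have bF: "b \<in> ?Fx" using ba by (rule FieldI1)
    have "(h b, h a) \<in> fst ?c" using ba bF a AF isoW_rel[OF h] by blast
    moreover have "even (h a)" using a unfolding A_def by blast
    ultimately have "even (h b)" unfolding rel_wconc by auto
    then show "b \<in> A" using bF unfolding A_def by blast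
  qed
  have i1: "isoW h (subw x A) (subw ?c E)" using isoW_rest2[OF wx h AF] hA by simp
  have i2: "isoW (\<lambda>n. n div 2) (subw ?c E) y"
    by (rule conc_left) (use reflc Fc E_def in auto)
  have j1: "isoW h (subw x (?Fx - A)) (subw ?c Od)" using isoW_rest2[OF wx h, of "?Fx - A"] hB by simp
  have j2: "isoW (\<lambda>n. n div 2) (subw ?c Od) z"
    by (rule conc_right) (use reflc Fc Od_def in auto)
  show ?thesis using ini isoW_comp[OF i1 i2] isoW_comp[OF j1 j2] word_iso_iff by blast
qed

lemma conc_iff_2:
  assumes wx: "wword x" and ini: "ini x A" and f1: "isoW f1 (subw x A) y" and f2: "isoW f2 (subw x (Field (fst x) - A)) z"
  shows "x \<simeq>w (y \<cdot>w z)"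
proof -
  let ?c = "y \<cdot>w z"
  let ?Fx = "Field (fst x)"
  have AF: "A \<subseteq> ?Fx" using ini unfolding ini_def by blast
  have FA: "Field (fst (subw x A)) = A" using Field_subw[OF wx AF] .
  have FB: "Field (fst (subw x (?Fx - A))) = ?Fx - A" using Field_subw[OF wx] by blast
  have b1: "bij_betw f1 A (Field (fst y))" using f1 FA unfolding isoW_def by simp
  have b2: "bij_betw f2 (?Fx - A) (Field (fst z))" using f2 FB unfolding isoW_def by simp
  define h where "h a = (if a \<in> A then 2 * f1 a else Suc (2 * f2 a))" for a
  have r1: "\<And>p q. p \<in> A \<Longrightarrow> q \<in> A \<Longrightarrow> (p,q) \<in> fst x \<longleftrightarrow> (f1 p, f1 q) \<in> fst y"
    using isoW_rel[OF f1] FA by (auto simp: fst_subw)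
  have r2: "\<And>p q. p \<in> ?Fx - A \<Longrightarrow> q \<in> ?Fx - A \<Longrightarrow> (p,q) \<in> fst x \<longleftrightarrow> (f2 p, f2 q) \<in> fst z"
    using isoW_rel[OF f2] FB by (auto simp: fst_subw)
  have l1: "\<And>p. p \<in> A \<Longrightarrow> snd y (f1 p) = snd x p" using isoW_lab[OF f1] FA by auto
  have l2: "\<And>p. p \<in> ?Fx - A \<Longrightarrow> snd z (f2 p) = snd x p" using isoW_lab[OF f2] FB by auto
  have f1in: "\<And>p. p \<in> A \<Longrightarrow> f1 p \<in> Field (fst y)" using b1 by (meson bij_betwE)
  have f2in: "\<And>p. p \<in> ?Fx - A \<Longrightarrow> f2 p \<in> Field (fst z)" using b2 by (meson bij_betwE)
  have inj: "inj_on h ?Fx"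
  proof (rule inj_onI)
    fix a b assume a: "a \<in> ?Fx" and b: "b \<in> ?Fx" and e: "h a = h b"
    show "a = b"
    proof (cases "a \<in> A"; cases "b \<in> A")
      assume "a \<in> A" "b \<in> A" then show ?thesis using e b1 unfolding h_def bij_betw_def inj_on_def by simp
    next
      assume "a \<in> A" "b \<notin> A" then show ?thesis using e unfolding h_def by presburger
    next
      assume "a \<notin> A" "b \<in> A" then show ?thesis using e unfolding h_def by presburger
    next
      assume "a \<notin> A" "b \<notin> A" then show ?thesis using e a b b2 unfolding h_def bij_betw_def inj_on_def by simp
    qed
  qed
  have img: "h ` ?Fx = Field (fst ?c)"
  proof -
    have "h ` ?Fx = h ` A \<union> h ` (?Fx - A)" using AF by blast
    also have "h ` A = (\<lambda>p. 2*p) ` (f1 ` A)" unfolding h_def by (auto simp: image_image)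
    also have "h ` (?Fx - A) = (\<lambda>p. 2*p+1) ` (f2 ` (?Fx - A))" unfolding h_def by (auto simp: image_image)
    also have "f1 ` A = Field (fst y)" using b1 by (simp add: bij_betw_def)
    also have "f2 ` (?Fx - A) = Field (fst z)" using b2 by (simp add: bij_betw_def)
    finally show ?thesis using Field_wconc by metis
  qed
  have "isoW h x ?c"
    unfolding isoW_def
  proof (intro conjI ballI)
    show "bij_betw h ?Fx (Field (fst ?c))" using inj img by (simp add: bij_betw_def)
  next
    fix p q assume p: "p \<in> ?Fx" and q: "q \<in> ?Fx"
    show "(p, q) \<in> fst x \<longleftrightarrow> (h p, h q) \<in> fst ?c"
    proof (cases "p \<in> A"; cases "q \<in> A")
      assume "p \<in> A" "q \<in> A" then show ?thesis using r1 unfolding h_def by simp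
    next
      assume pq: "p \<in> A" "q \<notin> A"
      have "(p,q) \<in> fst x \<or> (q,p) \<in> fst x" using wo_total[of "fst x" p q] wx p q unfolding wword_def by blast
      then have "(p,q) \<in> fst x" using pq ini unfolding ini_def by blast
      then show ?thesis using pq f1in f2in q unfolding h_def by simp
    next
      assume pq: "p \<notin> A" "q \<in> A"
      have "(p,q) \<notin> fst x" using pq ini unfolding ini_def by blast
      then show ?thesis using pq unfolding h_def by simp
    next
      assume "p \<notin> A" "q \<notin> A" then show ?thesis using r2 p q unfolding h_def by simp
    qed
  next
    fix p assume p: "p \<in> ?Fx"
    show "snd ?c (h p) = snd x p"
      using l1 l2 p unfolding h_def snd_wconc by auto
  qed
  then show ?thesis using word_iso_iff by blast
qed

lemma conc_iff:
  assumes wx: "wword x"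
  shows "x \<simeq>w (y \<cdot>w z) \<longleftrightarrow> (\<exists>A. ini x A \<and> subw x A \<simeq>w y \<and> subw x (Field (fst x) - A) \<simeq>w z)"
  using conc_iff_1[OF wx] conc_iff_2[OF wx] word_iso_iff by meson



lemma Field_letter[simp]: "Field (fst (letter a)) = {0}"
  unfolding letter_def by (simp add: Field_def)

lemma letter_iso_1:
  assumes "wword x" "S \<subseteq> Field (fst x)" "subw x S \<simeq>w letter a"
  shows "\<exists>p. S = {p} \<and> snd x p = a"
proof -
  obtain h where h: "isoW h (subw x S) (letter a)" using assms word_iso_iff by blast
  have FS: "Field (fst (subw x S)) = S" using Field_subw assms by blast
  have b: "bij_betw h S {0}" using h FS unfolding isoW_def by simp
  then have "finite S" "card S = 1" using bij_betw_finite bij_betw_same_card by fastforce+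
  then obtain p where p: "S = {p}" using card_1_singletonE by blast
  have "snd (letter a) (h p) = snd (subw x S) p" using isoW_lab[OF h] FS p by blast
  then have "snd x p = a" by (simp add: letter_def)
  then show ?thesis using p by blast
qed

lemma letter_iso_2:
  assumes "wword x" "p \<in> Field (fst x)"
  shows "subw x {p} \<simeq>w letter (snd x p)"
proof -
  have FS: "Field (fst (subw x {p})) = {p}" using Field_subw assms by blast
  have pp: "(p,p) \<in> fst x" using assms wword_refl by blast
  have "isoW (\<lambda>_. 0) (subw x {p}) (letter (snd x p))"
    unfolding isoW_def FS using pp by (auto simp: letter_def fst_subw bij_betw_def)
  then show ?thesis using word_iso_iff by blast
qed

lemma ini_single:
  assumes "wword x" "p \<in> Field (fst x)"
  shows "ini (subw x (Field (fst x) - usw x p)) {p}"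
proof -
  have "p \<notin> usw x p" by (simp add: usw_def)
  then have FS: "Field (fst (subw x (Field (fst x) - usw x p))) = Field (fst x) - usw x p"
    using Field_subw assms by blast
  show ?thesis unfolding ini_def FS
    using assms \<open>p \<notin> usw x p\<close> by (auto simp: fst_subw usw_def)
qed

lemma ini_next:
  assumes wx: "wword x" and A: "ini x A" and p: "p \<in> Field (fst x) - A"
    and i: "ini (subw x (Field (fst x) - A)) {p}"
  shows "A = usw x p"
proof
  show "A \<subseteq> usw x p"
  proof
    fix a assume a: "a \<in> A"
    have aF: "a \<in> Field (fst x)" using a A unfolding ini_def by blast
    have "(a,p) \<in> fst x \<or> (p,a) \<in> fst x" using wo_total[of "fst x" a p] wx aF p unfolding wword_def by blast
    moreover have "(p,a) \<notin> fst x" using a A p unfolding ini_def by blast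
    ultimately show "a \<in> usw x p" using a p unfolding usw_def by auto
  qed
next
  show "usw x p \<subseteq> A"
  proof
    fix b assume b: "b \<in> usw x p"
    have bF: "b \<in> Field (fst x)" using b usw_sub_Field by blast
    show "b \<in> A"
    proof (rule ccontr)
      assume "b \<notin> A"
      then have "(b,p) \<in> fst (subw x (Field (fst x) - A))" using b bF p by (auto simp: usw_def fst_subw)
      then have "b = p" using i unfolding ini_def by blast
      then show False using b by (simp add: usw_def)
    qed
  qed
qed

definition PREp :: "'a word \<Rightarrow> 'a word \<Rightarrow> bool" where
  "PREp x y \<longleftrightarrow> (\<exists>B f. ini y B \<and> isoW f x (subw y B))"

definition STRp :: "('a::linorder) word \<Rightarrow> 'a word \<Rightarrow> bool" where
  "STRp x y \<longleftrightarrow> (\<exists>a b f. a \<in> Field (fst x) \<and> b \<in> Field (fst y)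
      \<and> isoW f (subw x (usw x a)) (subw y (usw y b)) \<and> snd x a < snd y b)"

lemma wprefix_iff:
  assumes wx: "wword x" and wy: "wword y"
  shows "wprefix x y \<longleftrightarrow> PREp x y"
proof
  assume "wprefix x y"
  then obtain z where "wword z" "y \<simeq>w (x \<cdot>w z)" unfolding wprefix_def by blast
  then obtain B where B: "ini y B" "subw y B \<simeq>w x" using conc_iff[OF wy] by blast
  then show "PREp x y" unfolding PREp_def using word_iso_sym word_iso_iff by blast
next
  assume "PREp x y"
  then obtain B f where B: "ini y B" "isoW f x (subw y B)" unfolding PREp_def by blast
  have "subw y B \<simeq>w x" using B(2) word_iso_sym word_iso_iff by blast
  moreover have "subw y (Field (fst y) - B) \<simeq>w subw y (Field (fst y) - B)" by (rule word_iso_refl)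
  ultimately have "y \<simeq>w (x \<cdot>w subw y (Field (fst y) - B))" using conc_iff[OF wy] B(1) by blast
  then show "wprefix x y" unfolding wprefix_def using wword_subw[OF wy] by blast
qed

lemma str_decomp:
  assumes wx: "wword x" and h: "x \<simeq>w (c \<cdot>w (letter a \<cdot>w e))"
  shows "\<exists>p \<in> Field (fst x). subw x (usw x p) \<simeq>w c \<and> snd x p = a"
proof -
  obtain A where A: "ini x A" "subw x A \<simeq>w c" "subw x (Field (fst x) - A) \<simeq>w (letter a \<cdot>w e)"
    using conc_iff[OF wx] h by blast
  let ?x' = "subw x (Field (fst x) - A)"
  have wx': "wword ?x'" using wword_subw[OF wx] .
  have Fx': "Field (fst ?x') = Field (fst x) - A" using Field_subw[OF wx] by blast
  obtain A' where A': "ini ?x' A'" "subw ?x' A' \<simeq>w letter a"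
    using conc_iff[OF wx'] A(3) by blast
  have A'F: "A' \<subseteq> Field (fst ?x')" using A' unfolding ini_def by blast
  obtain p where p: "A' = {p}" "snd ?x' p = a" using letter_iso_1[OF wx' A'F A'(2)] by blast
  have pF: "p \<in> Field (fst x) - A" using A'F Fx' p by blast
  have "A = usw x p" using ini_next[OF wx A(1) pF] A'(1) p by simp
  then show ?thesis using A(2) p pF by auto
qed

lemma str_less_iff:
  assumes wx: "wword x" and wy: "wword y"
  shows "str_less x y \<longleftrightarrow> STRp x y"
proof
  assume "str_less x y"
  then obtain c a b e e' where h: "a < b" "x \<simeq>w (c \<cdot>w (letter a \<cdot>w e))" "y \<simeq>w (c \<cdot>w (letter b \<cdot>w e'))"
    unfolding str_less_def by blast
  obtain p where p: "p \<in> Field (fst x)" "subw x (usw x p) \<simeq>w c" "snd x p = a" using str_decomp[OF wx h(2)] by blast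
  obtain q where q: "q \<in> Field (fst y)" "subw y (usw y q) \<simeq>w c" "snd y q = b" using str_decomp[OF wy h(3)] by blast
  have "subw x (usw x p) \<simeq>w subw y (usw y q)" using p q word_iso_sym word_iso_trans by blast
  then show "STRp x y" unfolding STRp_def using p q h(1) word_iso_iff by blast
next
  assume "STRp x y"
  then obtain p q f where pq: "p \<in> Field (fst x)" "q \<in> Field (fst y)"
    "isoW f (subw x (usw x p)) (subw y (usw y q))" "snd x p < snd y q" unfolding STRp_def by blast
  let ?c = "subw x (usw x p)"
  have gen: "z \<simeq>w (?c \<cdot>w (letter (snd z r) \<cdot>w subw z (Field (fst z) - usw z r - {r})))"
    if wz: "wword z" and r: "r \<in> Field (fst z)" and iso: "subw z (usw z r) \<simeq>w ?c" for z :: "'a word" and r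
  proof -
    let ?z' = "subw z (Field (fst z) - usw z r)"
    have wz': "wword ?z'" using wword_subw[OF wz] .
    have Fz': "Field (fst ?z') = Field (fst z) - usw z r" using Field_subw[OF wz] by blast
    have rF: "r \<in> Field (fst ?z')" using Fz' r by (simp add: usw_def)
    have i1: "ini ?z' {r}" using ini_single[OF wz r] .
    have i2: "subw ?z' {r} \<simeq>w letter (snd z r)" using letter_iso_2[OF wz' rF] by simp
    have i3: "subw ?z' (Field (fst ?z') - {r}) = subw z (Field (fst z) - usw z r - {r})"
      unfolding Fz' subw_subw by (simp add: Int_absorb1 Diff_subset)
    have "?z' \<simeq>w (letter (snd z r) \<cdot>w subw z (Field (fst z) - usw z r - {r}))"
      using conc_iff[OF wz'] i1 i2 i3 word_iso_refl by metis
    then show ?thesis using conc_iff[OF wz] usw_ini[OF wz] iso by blast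
  qed
  have hx: "x \<simeq>w (?c \<cdot>w (letter (snd x p) \<cdot>w subw x (Field (fst x) - usw x p - {p})))"
    using gen[OF wx pq(1)] word_iso_refl by blast
  have "subw y (usw y q) \<simeq>w ?c" using pq(3) word_iso_iff word_iso_sym by blast
  then have hy: "y \<simeq>w (?c \<cdot>w (letter (snd y q) \<cdot>w subw y (Field (fst y) - usw y q - {q})))"
    using gen[OF wy pq(2)] by blast
  show "str_less x y" unfolding str_less_def
    using hx hy pq(4) wword_subw[OF wx] wword_subw[OF wy] by blast
qed

lemma lex_le_iff:
  assumes "wword x" "wword y"
  shows "lex_le x y \<longleftrightarrow> PREp x y \<or> STRp x y"
  unfolding lex_le_def using wprefix_iff[OF assms] str_less_iff[OF assms] by simp



lemma ini_usw_sub: "ini x A \<Longrightarrow> a \<in> A \<Longrightarrow> usw x a \<subseteq> A"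
  unfolding ini_def usw_def by blast

lemma ini_sub_Field: "ini x A \<Longrightarrow> A \<subseteq> Field (fst x)"
  unfolding ini_def by blast

lemma RU:
  assumes wx: "wword x" and wy: "wword y" and A: "ini x A" and B: "ini y B"
    and f: "isoW f (subw x A) (subw y B)" and a: "a \<in> A"
  shows "f a \<in> B \<and> isoW f (subw x (usw x a)) (subw y (usw y (f a))) \<and> snd y (f a) = snd x a"
proof -
  have AF: "A \<subseteq> Field (fst x)" using A ini_sub_Field by blast
  have BF: "B \<subseteq> Field (fst y)" using B ini_sub_Field by blast
  have FA: "Field (fst (subw x A)) = A" using Field_subw[OF wx AF] .
  have FB: "Field (fst (subw y B)) = B" using Field_subw[OF wy BF] .
  have fa: "f a \<in> B" using isoW_in[OF f] FA FB a by blast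
  have uA: "usw x a \<subseteq> A" using ini_usw_sub[OF A a] .
  have uB: "usw y (f a) \<subseteq> B" using ini_usw_sub[OF B fa] .
  have img: "f ` usw x a = usw y (f a)"
  proof -
    have "f ` usw (subw x A) a = usw (subw y B) (f a)" using isoW_usw[OF f] FA a by blast
    moreover have "usw (subw x A) a = usw x a" using uA a by (simp add: usw_subw Int_absorb2)
    moreover have "usw (subw y B) (f a) = usw y (f a)" using uB fa by (simp add: usw_subw Int_absorb2)
    ultimately show ?thesis by simp
  qed
  have "isoW f (subw (subw x A) (usw x a)) (subw (subw y B) (f ` usw x a))"
    using isoW_rest2[OF wword_subw[OF wx] f] FA uA by simp
  then have "isoW f (subw x (usw x a)) (subw y (usw y (f a)))"
    using img uA uB by (simp add: subw_subw Int_absorb1)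
  moreover have "snd y (f a) = snd x a" using isoW_lab[OF f] FA a by simp
  ultimately show ?thesis using fa by blast
qed

lemma transport:
  assumes wy: "wword y" and wz: "wword z" and C: "ini z C" and g: "isoW g y (subw z C)" and B: "ini y B"
  shows "ini z (g ` B) \<and> isoW g (subw y B) (subw z (g ` B))"
proof -
  have CF: "C \<subseteq> Field (fst z)" using C ini_sub_Field by blast
  have FC: "Field (fst (subw z C)) = C" using Field_subw[OF wz CF] .
  have BF: "B \<subseteq> Field (fst y)" using B ini_sub_Field by blast
  have gB: "g ` B \<subseteq> C" using isoW_Field[OF g] FC BF by blast
  have i1: "ini (subw z C) (g ` B)" using isoW_ini[OF g B] .
  have i2: "ini z (g ` B)" using ini_trans[OF C i1] .
  have "isoW g (subw y B) (subw (subw z C) (g ` B))" using isoW_rest2[OF wy g BF] .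
  then have "isoW g (subw y B) (subw z (g ` B))" using gB by (simp add: subw_subw Int_absorb1)
  then show ?thesis using i2 by blast
qed

lemma subw_Field': "subw x (Field (fst x)) = x" by (rule subw_Field)

lemma PRE_PRE:
  assumes wx: "wword x" and wy: "wword y" and wz: "wword z" and "PREp x y" "PREp y z"
  shows "PREp x z"
proof -
  obtain B f where Bf: "ini y B" "isoW f x (subw y B)" using assms(4) unfolding PREp_def by blast
  obtain C g where Cg: "ini z C" "isoW g y (subw z C)" using assms(5) unfolding PREp_def by blast
  have t: "ini z (g ` B) \<and> isoW g (subw y B) (subw z (g ` B))" using transport[OF wy wz Cg(1) Cg(2) Bf(1)] .
  then show ?thesis unfolding PREp_def using isoW_comp[OF Bf(2)] by blast
qed

lemma STR_PRE:
  assumes wx: "wword x" and wy: "wword y" and wz: "wword z" and "STRp x y" "PREp y z"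
  shows "STRp x z"
proof -
  obtain a b f where abf: "a \<in> Field (fst x)" "b \<in> Field (fst y)"
      "isoW f (subw x (usw x a)) (subw y (usw y b))" "snd x a < snd y b"
    using assms(4) unfolding STRp_def by blast
  obtain C g where Cg: "ini z C" "isoW g y (subw z C)" using assms(5) unfolding PREp_def by blast
  have g': "isoW g (subw y (Field (fst y))) (subw z C)" using Cg(2) by (simp add: subw_Field)
  have r: "g b \<in> C \<and> isoW g (subw y (usw y b)) (subw z (usw z (g b))) \<and> snd z (g b) = snd y b"
    using RU[OF wy wz ini_Field Cg(1) g' abf(2)] .
  have "g b \<in> Field (fst z)" using r Cg(1) ini_sub_Field by blast
  then show ?thesis unfolding STRp_def using abf r isoW_comp[OF abf(3)] by (metis)
qed

lemma STR_STR:
  assumes wx: "wword x" and wy: "wword y" and wz: "wword z" and "STRp x y" "STRp y z"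
  shows "STRp x z"
proof -
  obtain a b f where abf: "a \<in> Field (fst x)" "b \<in> Field (fst y)"
      "isoW f (subw x (usw x a)) (subw y (usw y b))" "snd x a < snd y b"
    using assms(4) unfolding STRp_def by blast
  obtain b' c g where bcg: "b' \<in> Field (fst y)" "c \<in> Field (fst z)"
      "isoW g (subw y (usw y b')) (subw z (usw z c))" "snd y b' < snd z c"
    using assms(5) unfolding STRp_def by blast
  have tot: "(b,b') \<in> fst y \<or> (b',b) \<in> fst y" using wo_total[of "fst y" b b'] wy abf(2) bcg(1) unfolding wword_def by blast
  consider "b = b'" | "b \<in> usw y b'" | "b' \<in> usw y b" using tot unfolding usw_def by blast
  then show ?thesis
  proof cases
    case 1
    then show ?thesis unfolding STRp_def using abf bcg isoW_comp[OF abf(3)] by (metis order.strict_trans)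
  next
    case 2
    have r: "g b \<in> usw z c \<and> isoW g (subw y (usw y b)) (subw z (usw z (g b))) \<and> snd z (g b) = snd y b"
      using RU[OF wy wz usw_ini[OF wy] usw_ini[OF wz] bcg(3) 2] .
    have "g b \<in> Field (fst z)" using r usw_sub_Field by blast
    then show ?thesis unfolding STRp_def using abf r isoW_comp[OF abf(3)] by metis
  next
    case 3
    have FA: "Field (fst (subw x (usw x a))) = usw x a" using Field_subw[OF wx usw_sub_Field] .
    have FB: "Field (fst (subw y (usw y b))) = usw y b" using Field_subw[OF wy usw_sub_Field] .
    obtain a' where a': "a' \<in> usw x a" "f a' = b'" using isoW_Field[OF abf(3)] FA FB 3 by (metis imageE)
    have r: "f a' \<in> usw y b \<and> isoW f (subw x (usw x a')) (subw y (usw y (f a'))) \<and> snd y (f a') = snd x a'"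
      using RU[OF wx wy usw_ini[OF wx] usw_ini[OF wy] abf(3) a'(1)] .
    have "a' \<in> Field (fst x)" using a' usw_sub_Field by blast
    then show ?thesis unfolding STRp_def using r a' bcg isoW_comp[of f _ _ g] by metis
  qed
qed

lemma PRE_STR:
  assumes wx: "wword x" and wy: "wword y" and wz: "wword z" and "PREp x y" "STRp y z"
  shows "PREp x z \<or> STRp x z"
proof -
  obtain B f where Bf: "ini y B" "isoW f x (subw y B)" using assms(4) unfolding PREp_def by blast
  obtain b c g where bcg: "b \<in> Field (fst y)" "c \<in> Field (fst z)"
      "isoW g (subw y (usw y b)) (subw z (usw z c))" "snd y b < snd z c"
    using assms(5) unfolding STRp_def by blast
  have BF: "B \<subseteq> Field (fst y)" using Bf(1) ini_sub_Field by blast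
  show ?thesis
  proof (cases "B \<subseteq> usw y b")
    case True
    have wyb: "wword (subw y (usw y b))" using wword_subw[OF wy] .
    have i: "ini (subw y (usw y b)) B" using ini_in_subw[OF Bf(1) True wy usw_sub_Field] .
    have FU: "Field (fst (subw y (usw y b))) = usw y b" using Field_subw[OF wy usw_sub_Field] .
    have t: "ini (subw z (usw z c)) (g ` B) \<and> isoW g (subw (subw y (usw y b)) B) (subw (subw z (usw z c)) (g ` B))"
      using isoW_ini[OF bcg(3) i] isoW_rest2[OF wyb bcg(3), of B] True FU by simp
    have gB: "g ` B \<subseteq> usw z c" using t ini_sub_Field Field_subw_le by blast
    have "isoW g (subw y B) (subw z (g ` B))" using t True gB by (simp add: subw_subw Int_absorb1)
    moreover have "ini z (g ` B)" using ini_trans[OF usw_ini[OF wz]] t by blast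
    ultimately show ?thesis unfolding PREp_def using isoW_comp[OF Bf(2)] by blast
  next
    case False
    then have ub: "usw y b \<subseteq> B" using ini_chain[OF wy Bf(1) usw_ini[OF wy]] by blast
    obtain e where e: "e \<in> B" "e \<notin> usw y b" using False by blast
    have "(b,e) \<in> fst y \<or> (e,b) \<in> fst y" using wo_total[of "fst y" b e] wy bcg(1) e BF unfolding wword_def by blast
    then have bB: "b \<in> B" using e Bf(1) unfolding ini_def usw_def by blast
    have FB: "Field (fst (subw y B)) = B" using Field_subw[OF wy BF] .
    obtain a' where a': "a' \<in> Field (fst x)" "f a' = b" using isoW_Field[OF Bf(2)] FB bB by (metis imageE)
    have f': "isoW f (subw x (Field (fst x))) (subw y B)" using Bf(2) by (simp add: subw_Field)
    have r: "f a' \<in> B \<and> isoW f (subw x (usw x a')) (subw y (usw y (f a'))) \<and> snd y (f a') = snd x a'"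
      using RU[OF wx wy ini_Field Bf(1) f' a'(1)] .
    have "STRp x z" unfolding STRp_def using r a' bcg isoW_comp[of f _ _ g] by metis
    then show ?thesis by blast
  qed
qed

lemma STR_irrefl:
  assumes wx: "wword x" shows "\<not> STRp x x"
proof
  assume "STRp x x"
  then obtain a b f where abf: "a \<in> Field (fst x)" "b \<in> Field (fst x)"
      "isoW f (subw x (usw x a)) (subw x (usw x b))" "snd x a < snd x b"
    unfolding STRp_def by blast
  have "usw x a = usw x b" using rigid[OF wx usw_ini[OF wx] usw_ini[OF wx] abf(3)] .
  then have "a = b" using usw_inj[OF wx abf(1,2)] by blast
  then show False using abf(4) by simp
qed

lemma PRE_antisym:
  assumes wx: "wword x" and wy: "wword y" and "PREp x y" "PREp y x"
  shows "x \<simeq>w y"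
proof -
  obtain B f where Bf: "ini y B" "isoW f x (subw y B)" using assms(3) unfolding PREp_def by blast
  obtain A g where Ag: "ini x A" "isoW g y (subw x A)" using assms(4) unfolding PREp_def by blast
  have t: "ini x (g ` B) \<and> isoW g (subw y B) (subw x (g ` B))" using transport[OF wy wx Ag(1) Ag(2) Bf(1)] .
  have c: "isoW (g \<circ> f) (subw x (Field (fst x))) (subw x (g ` B))" using isoW_comp[OF Bf(2)] t by (simp add: subw_Field)
  have e1: "Field (fst x) = g ` B" using rigid[OF wx ini_Field _ c] t by blast
  have AF: "A \<subseteq> Field (fst x)" using Ag(1) ini_sub_Field by blast
  have gF: "g ` Field (fst y) = A" using isoW_Field[OF Ag(2)] Field_subw[OF wx AF] by simp
  have BF: "B \<subseteq> Field (fst y)" using Bf(1) ini_sub_Field by blast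
  have "g ` Field (fst y) = g ` B" using gF e1 AF BF by blast
  then have "B = Field (fst y)" using isoW_inj[OF Ag(2)] BF
    by (metis Field_subw_le inj_on_image_eq_iff subset_refl subw_Field)
  then show ?thesis using Bf(2) subw_Field word_iso_iff by metis
qed

lemma iso_PRE: "wword y \<Longrightarrow> isoW f x y \<Longrightarrow> PREp x y"
  unfolding PREp_def using ini_Field subw_Field by metis

lemma wiso_PRE: "wword y \<Longrightarrow> x \<simeq>w y \<Longrightarrow> PREp x y"
  using iso_PRE word_iso_iff by blast

lemma lex_refl: "wword x \<Longrightarrow> lex_le x x"
  using lex_le_iff wiso_PRE word_iso_refl by blast

lemma lex_trans:
  assumes "wword x" "wword y" "wword z" "lex_le x y" "lex_le y z"
  shows "lex_le x z"
proof -
  have a: "PREp x y \<or> STRp x y" using assms(1,2,4) lex_le_iff by blast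
  have b: "PREp y z \<or> STRp y z" using assms(2,3,5) lex_le_iff by blast
  have "PREp x z \<or> STRp x z"
    using a b PRE_PRE[OF assms(1-3)] PRE_STR[OF assms(1-3)] STR_PRE[OF assms(1-3)] STR_STR[OF assms(1-3)] by blast
  then show ?thesis using lex_le_iff assms(1,3) by blast
qed

lemma lex_antisym:
  assumes wx: "wword x" and wy: "wword y" and "lex_le x y" "lex_le y x"
  shows "x \<simeq>w y"
proof -
  have "PREp x y \<or> STRp x y" "PREp y x \<or> STRp y x" using assms lex_le_iff by blast+
  then show ?thesis
    using PRE_antisym[OF wx wy] STR_PRE[OF wx wy wx] STR_STR[OF wx wy wx] STR_PRE[OF wy wx wy]
      STR_irrefl[OF wx] STR_irrefl[OF wy] by blast
qed

lemma lex_iso_left: assumes "wword x" "wword x'" "wword y" "x' \<simeq>w x" "lex_le x y" shows "lex_le x' y"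
proof -
  have "lex_le x' x" using assms wiso_PRE lex_le_iff by blast
  then show ?thesis using lex_trans assms by blast
qed

lemma lex_iso_right: assumes "wword x" "wword y" "wword y'" "y \<simeq>w y'" "lex_le x y" shows "lex_le x y'"
proof -
  have "lex_le y y'" using assms wiso_PRE lex_le_iff by blast
  then show ?thesis using lex_trans assms by blast
qed

lemma PRE_lex: "wword x \<Longrightarrow> wword y \<Longrightarrow> PREp x y \<Longrightarrow> lex_le x y"
  using lex_le_iff by blast

lemma STR_lex: "wword x \<Longrightarrow> wword y \<Longrightarrow> STRp x y \<Longrightarrow> lex_le x y"
  using lex_le_iff by blast



definition blk :: "nat \<Rightarrow> nat" where "blk n = fst (prod_decode n)"
definition pos :: "nat \<Rightarrow> nat" where "pos n = snd (prod_decode n)"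

definition Blk :: "(nat \<Rightarrow> 'a word) \<Rightarrow> nat set \<Rightarrow> nat set" where
  "Blk v S = {n. blk n \<in> S \<and> pos n \<in> Field (fst (v (blk n)))}"

lemma blk_enc[simp]: "blk (prod_encode (i,p)) = i" by (simp add: blk_def)
lemma pos_enc[simp]: "pos (prod_encode (i,p)) = p" by (simp add: pos_def)
lemma enc_blk_pos: "prod_encode (blk n, pos n) = n" by (simp add: blk_def pos_def)
lemma blk_pos_eq: "blk m = blk n \<Longrightarrow> pos m = pos n \<Longrightarrow> m = n"
  by (metis enc_blk_pos)

lemma Blk_Int: "Blk v S \<inter> Blk v S' = Blk v (S \<inter> S')" unfolding Blk_def by auto
lemma Blk_Diff: "Blk v S - Blk v S' = Blk v (S - S')" unfolding Blk_def by auto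
lemma Blk_mono: "S \<subseteq> S' \<Longrightarrow> Blk v S \<subseteq> Blk v S'" unfolding Blk_def by auto
lemma Blk_empty[simp]: "Blk v {} = {}" unfolding Blk_def by auto
lemma in_Blk: "n \<in> Blk v S \<longleftrightarrow> blk n \<in> S \<and> pos n \<in> Field (fst (v (blk n)))" unfolding Blk_def by auto
lemma Blk_ne: "\<beta> \<in> S \<Longrightarrow> Field (fst (v \<beta>)) \<noteq> {} \<Longrightarrow> Blk v S \<noteq> {}"
  unfolding Blk_def by (auto intro!: exI[of _ "prod_encode (\<beta>, SOME q. q \<in> Field (fst (v \<beta>)))"] some_in_eq[THEN iffD2])

lemma rel_wprod:
  "(m,n) \<in> fst (wprod J v) \<longleftrightarrow> blk m \<in> Field J \<and> blk n \<in> Field J \<and> pos m \<in> Field (fst (v (blk m)))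
     \<and> pos n \<in> Field (fst (v (blk n))) \<and>
     ((blk m \<noteq> blk n \<and> (blk m, blk n) \<in> J) \<or> (blk m = blk n \<and> (pos m, pos n) \<in> fst (v (blk m))))"
proof
  assume "(m,n) \<in> fst (wprod J v)"
  then show "blk m \<in> Field J \<and> blk n \<in> Field J \<and> pos m \<in> Field (fst (v (blk m)))
     \<and> pos n \<in> Field (fst (v (blk n))) \<and>
     ((blk m \<noteq> blk n \<and> (blk m, blk n) \<in> J) \<or> (blk m = blk n \<and> (pos m, pos n) \<in> fst (v (blk m))))"
    unfolding wprod_def by auto
next
  assume h: "blk m \<in> Field J \<and> blk n \<in> Field J \<and> pos m \<in> Field (fst (v (blk m)))
     \<and> pos n \<in> Field (fst (v (blk n))) \<and>
     ((blk m \<noteq> blk n \<and> (blk m, blk n) \<in> J) \<or> (blk m = blk n \<and> (pos m, pos n) \<in> fst (v (blk m))))"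
  have "(prod_encode (blk m, pos m), prod_encode (blk n, pos n)) \<in> fst (wprod J v)"
    unfolding wprod_def fst_conv
    apply (rule CollectI)
    apply (rule exI[of _ "blk m"], rule exI[of _ "blk n"], rule exI[of _ "pos m"], rule exI[of _ "pos n"])
    using h by simp
  then show "(m,n) \<in> fst (wprod J v)" by (simp add: enc_blk_pos)
qed

lemma snd_wprod: "snd (wprod J v) n = snd (v (blk n)) (pos n)"
  unfolding wprod_def blk_def pos_def by simp

lemma Field_wprod:
  assumes J: "Well_order J" and v: "\<forall>i\<in>Field J. wword (v i)"
  shows "Field (fst (wprod J v)) = Blk v (Field J)"
proof
  show "Field (fst (wprod J v)) \<subseteq> Blk v (Field J)"
  proof
    fix n assume "n \<in> Field (fst (wprod J v))"
    then obtain m where "(n,m) \<in> fst (wprod J v) \<or> (m,n) \<in> fst (wprod J v)"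
      unfolding Field_def by blast
    then show "n \<in> Blk v (Field J)" unfolding rel_wprod in_Blk by blast
  qed
  show "Blk v (Field J) \<subseteq> Field (fst (wprod J v))"
  proof
    fix n assume n: "n \<in> Blk v (Field J)"
    have "(blk n, blk n) \<in> J" using n J wo_refl by (auto simp: in_Blk)
    have wv: "wword (v (blk n))" using n v by (auto simp: in_Blk)
    moreover have "(pos n, pos n) \<in> fst (v (blk n))" using n wword_refl[OF wv] by (auto simp: in_Blk)
    ultimately have "(n,n) \<in> fst (wprod J v)" using n by (auto simp: rel_wprod in_Blk)
    then show "n \<in> Field (fst (wprod J v))" by (rule FieldI1)
  qed
qed

lemma rel_wprod_blk: "(m,n) \<in> fst (wprod J v) \<Longrightarrow> Well_order J \<Longrightarrow> (blk m, blk n) \<in> J"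
  using rel_wprod[of m n J v] wo_refl by metis

lemma rel_wprod_lt: "m \<in> Blk v (Field J) \<Longrightarrow> n \<in> Blk v (Field J) \<Longrightarrow> blk m \<noteq> blk n \<Longrightarrow> (blk m, blk n) \<in> J
   \<Longrightarrow> (m,n) \<in> fst (wprod J v)"
  by (simp add: rel_wprod in_Blk)

lemma block_iso:
  assumes J: "Well_order J" and v: "\<forall>i\<in>Field J. wword (v i)" and wW: "wword (wprod J v)" and b: "\<beta> \<in> Field J"
  shows "isoW pos (subw (wprod J v) (Blk v {\<beta>})) (v \<beta>)"
proof -
  have sub: "Blk v {\<beta>} \<subseteq> Field (fst (wprod J v))" using Field_wprod[OF J v] b Blk_mono by blast
  have F: "Field (fst (subw (wprod J v) (Blk v {\<beta>}))) = Blk v {\<beta>}" using Field_subw[OF wW sub] .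
  show ?thesis unfolding isoW_def F
  proof (intro conjI ballI)
    show "bij_betw pos (Blk v {\<beta>}) (Field (fst (v \<beta>)))"
      unfolding bij_betw_def
    proof
      show "inj_on pos (Blk v {\<beta>})" unfolding inj_on_def by (auto simp: in_Blk intro: blk_pos_eq)
      show "pos ` Blk v {\<beta>} = Field (fst (v \<beta>))"
      proof
        show "pos ` Blk v {\<beta>} \<subseteq> Field (fst (v \<beta>))" by (auto simp: in_Blk)
        show "Field (fst (v \<beta>)) \<subseteq> pos ` Blk v {\<beta>}"
        proof
          fix q assume "q \<in> Field (fst (v \<beta>))"
          then have "prod_encode (\<beta>, q) \<in> Blk v {\<beta>}" by (simp add: in_Blk)
          then show "q \<in> pos ` Blk v {\<beta>}" by (metis image_eqI pos_enc)
        qed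
      qed
    qed
  next
    fix m n assume "m \<in> Blk v {\<beta>}" "n \<in> Blk v {\<beta>}"
    then show "(m, n) \<in> fst (subw (wprod J v) (Blk v {\<beta>})) \<longleftrightarrow> (pos m, pos n) \<in> fst (v \<beta>)"
      using b by (auto simp: fst_subw rel_wprod in_Blk)
  next
    fix n assume "n \<in> Blk v {\<beta>}"
    then show "snd (v \<beta>) (pos n) = snd (subw (wprod J v) (Blk v {\<beta>})) n"
      by (auto simp: snd_wprod in_Blk)
  qed
qed

lemma subw_Blk_wprod:
  assumes J: "Well_order J" and S: "S \<subseteq> Field J"
  shows "subw (wprod J v) (Blk v S) = wprod (Restr J S) v"
proof -
  have FS: "Field (Restr J S) = S"
  proof
    show "Field (Restr J S) \<subseteq> S" by (auto simp: Field_def)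
    show "S \<subseteq> Field (Restr J S)"
    proof
      fix i assume "i \<in> S"
      then have "(i,i) \<in> Restr J S" using S wo_refl[OF J, of i] by blast
      then show "i \<in> Field (Restr J S)" by (rule FieldI1)
    qed
  qed
  have "fst (subw (wprod J v) (Blk v S)) = fst (wprod (Restr J S) v)"
  proof (rule set_eqI)
    fix x :: "nat \<times> nat"
    obtain m n where x: "x = (m,n)" by (cases x)
    show "x \<in> fst (subw (wprod J v) (Blk v S)) \<longleftrightarrow> x \<in> fst (wprod (Restr J S) v)"
      unfolding x fst_subw using S by (auto simp: rel_wprod in_Blk FS)
  qed
  moreover have "snd (subw (wprod J v) (Blk v S)) = snd (wprod (Restr J S) v)"
    by (auto simp: snd_wprod)
  ultimately show ?thesis by (metis prod.collapse)
qed

lemma wprod_pointwise_iso: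
  assumes J: "Well_order J" and v: "\<forall>i\<in>Field J. wword (v i)" and v': "\<forall>i\<in>Field J. wword (v' i)"
    and iso: "\<forall>i\<in>Field J. v i \<simeq>w v' i"
  shows "wprod J v \<simeq>w wprod J v'"
proof -
  have "\<forall>i\<in>Field J. \<exists>h. isoW h (v i) (v' i)" using iso word_iso_iff by blast
  then obtain h where h: "\<forall>i\<in>Field J. isoW (h i) (v i) (v' i)" using bchoice by metis
  define H where "H n = prod_encode (blk n, h (blk n) (pos n))" for n
  have F1: "Field (fst (wprod J v)) = Blk v (Field J)" using Field_wprod[OF J v] .
  have F2: "Field (fst (wprod J v')) = Blk v' (Field J)" using Field_wprod[OF J v'] .
  have hin: "\<And>n. n \<in> Blk v (Field J) \<Longrightarrow> h (blk n) (pos n) \<in> Field (fst (v' (blk n)))"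
    using h isoW_in by (fastforce simp: in_Blk)
  have "isoW H (wprod J v) (wprod J v')"
    unfolding isoW_def F1 F2
  proof (intro conjI ballI)
    show "bij_betw H (Blk v (Field J)) (Blk v' (Field J))"
      unfolding bij_betw_def
    proof
      show "inj_on H (Blk v (Field J))"
      proof (rule inj_onI)
        fix m n assume m: "m \<in> Blk v (Field J)" and n: "n \<in> Blk v (Field J)" and e: "H m = H n"
        have b: "blk m = blk n" using e unfolding H_def by simp
        have "h (blk m) (pos m) = h (blk m) (pos n)" using e b unfolding H_def by simp
        then have "pos m = pos n" using h m n b isoW_inj unfolding inj_on_def by (metis in_Blk)
        then show "m = n" using b blk_pos_eq by blast
      qed
      show "H ` Blk v (Field J) = Blk v' (Field J)"
      proof
        show "H ` Blk v (Field J) \<subseteq> Blk v' (Field J)" using hin by (auto simp: H_def in_Blk)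
        show "Blk v' (Field J) \<subseteq> H ` Blk v (Field J)"
        proof
          fix n assume n: "n \<in> Blk v' (Field J)"
          then obtain q where q: "q \<in> Field (fst (v (blk n)))" "h (blk n) q = pos n"
            using h isoW_Field by (metis imageE in_Blk)
          have "prod_encode (blk n, q) \<in> Blk v (Field J)" using q n by (simp add: in_Blk)
          moreover have "H (prod_encode (blk n, q)) = n" using q by (simp add: H_def enc_blk_pos)
          ultimately show "n \<in> H ` Blk v (Field J)" by (metis image_eqI)
        qed
      qed
    qed
  next
    fix m n assume m: "m \<in> Blk v (Field J)" and n: "n \<in> Blk v (Field J)"
    have hm: "h (blk m) (pos m) \<in> Field (fst (v' (blk m)))" using hin m .
    have hn: "h (blk n) (pos n) \<in> Field (fst (v' (blk n)))" using hin n .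
    have r: "blk m = blk n \<Longrightarrow> (pos m, pos n) \<in> fst (v (blk m)) \<longleftrightarrow> (h (blk m) (pos m), h (blk m) (pos n)) \<in> fst (v' (blk m))"
      using h m n isoW_rel by (metis in_Blk)
    show "(m, n) \<in> fst (wprod J v) \<longleftrightarrow> (H m, H n) \<in> fst (wprod J v')"
      using m n hm hn r by (auto simp: rel_wprod H_def in_Blk)
  next
    fix n assume n: "n \<in> Blk v (Field J)"
    have hn: "isoW (h (blk n)) (v (blk n)) (v' (blk n))" using h n by (auto simp: in_Blk)
    show "snd (wprod J v') (H n) = snd (wprod J v) n"
      using isoW_lab[OF hn] n by (auto simp: snd_wprod H_def in_Blk)
  qed
  then show ?thesis using word_iso_iff by blast
qed

lemma ini_Blk:
  assumes J: "Well_order J" and v: "\<forall>i\<in>Field J. wword (v i)" and wW: "wword (wprod J v)"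
    and T: "T \<subseteq> Field J" and ST: "S \<subseteq> T" and dc: "\<forall>\<beta>\<in>S. \<forall>\<beta>'\<in>T. (\<beta>',\<beta>) \<in> J \<longrightarrow> \<beta>' \<in> S"
  shows "ini (subw (wprod J v) (Blk v T)) (Blk v S)"
proof -
  have sub: "Blk v T \<subseteq> Field (fst (wprod J v))" using Field_wprod[OF J v] T Blk_mono by blast
  have F: "Field (fst (subw (wprod J v) (Blk v T))) = Blk v T" using Field_subw[OF wW sub] .
  show ?thesis unfolding ini_def F
  proof (intro conjI ballI allI impI)
    show "Blk v S \<subseteq> Blk v T" using ST Blk_mono by blast
    fix a b assume a: "a \<in> Blk v S" and ba: "(b,a) \<in> fst (subw (wprod J v) (Blk v T))"
    then have "(b,a) \<in> fst (wprod J v)" "b \<in> Blk v T" by (auto simp: fst_subw)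
    moreover have "(blk b, blk a) \<in> J" using rel_wprod_blk[of b a J v] J \<open>(b,a) \<in> fst (wprod J v)\<close> by blast
    ultimately show "b \<in> Blk v S" using a dc by (auto simp: in_Blk)
  qed
qed

lemma primitive_ne: "primitive x \<Longrightarrow> Field (fst x) \<noteq> {}"
proof
  assume p: "primitive x" and e: "Field (fst x) = {}"
  have w: "wword x" using p unfolding primitive_def by blast
  have wo: "Well_order ({} :: nat rel)" by (simp add: well_order_on_def linear_order_on_def
        partial_order_on_def preorder_on_def refl_on_def trans_def antisym_def total_on_def)
  have F0: "Field (fst (wpow x {})) = {}" unfolding wpow_def wprod_def by (simp add: Field_def)
  have "fst x = {}" using e by (auto simp: Field_def)
  then have "x \<simeq>w wpow x {}" unfolding word_iso_def using F0 e by (simp add: bij_betw_def)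
  then have "card (Field ({} :: nat rel)) = 1" using p w wo unfolding primitive_def by blast
  then show False by simp
qed



lemma M:
  fixes p :: "('a::linorder) word"
  assumes J: "Well_order J" and v: "\<forall>i\<in>Field J. wword (v i) \<and> Field (fst (v i)) \<noteq> {}"
    and wW: "wword (wprod J v)" and S: "S \<subseteq> Field J"
    and wp: "wword p" and suf: "\<forall>A. ini p A \<and> A \<noteq> Field (fst p) \<longrightarrow> lex_le p (subw p (Field (fst p) - A))"
    and small: "\<forall>\<beta>\<in>S. \<not> lex_le p (v \<beta>)"
    and le: "lex_le p (subw (wprod J v) (Blk v S))"
  shows "\<exists>T \<subseteq> S. (\<forall>\<beta>\<in>T. \<forall>\<beta>'\<in>S. (\<beta>',\<beta>) \<in> J \<longrightarrow> \<beta>' \<in> T) \<and> p \<simeq>w subw (wprod J v) (Blk v T)"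
proof -
  let ?W = "wprod J v"
  let ?Y = "subw ?W (Blk v S)"
  have vw: "\<forall>i\<in>Field J. wword (v i)" using v by blast
  have FW: "Field (fst ?W) = Blk v (Field J)" using Field_wprod[OF J vw] .
  have BS: "Blk v S \<subseteq> Field (fst ?W)" using FW S Blk_mono by blast
  have FY: "Field (fst ?Y) = Blk v S" using Field_subw[OF wW BS] .
  have wY: "wword ?Y" using wword_subw[OF wW] .
  define L where "L \<beta> = Blk v {\<beta>'\<in>S. (\<beta>',\<beta>) \<in> J \<and> \<beta>' \<noteq> \<beta>}" for \<beta>
  have relY: "\<And>x y. x \<in> Blk v S \<Longrightarrow> y \<in> Blk v S \<Longrightarrow> (x,y) \<in> fst ?Y \<longleftrightarrow> (x,y) \<in> fst ?W"
    by (simp add: fst_subw)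
  have gen: False if
    f: "isoW f (subw p D0) (subw ?W B)" and D0: "ini p D0" and Bini: "ini ?Y B"
    and \<beta>: "\<beta> \<in> S" and LB: "L \<beta> \<subseteq> B" and BL: "B - L \<beta> \<subseteq> Blk v {\<beta>}"
    and cont: "(D0 = Field (fst p) \<and> B - L \<beta> \<noteq> {}) \<or>
       (\<exists>a D. D0 = usw p a \<and> a \<in> Field (fst p) \<and> D \<in> Blk v {\<beta>} \<and> B = usw ?Y D \<and> snd p a < snd ?W D)"
    for f D0 B \<beta>
  proof -
    have \<beta>J: "\<beta> \<in> Field J" using \<beta> S by blast
    have wv: "wword (v \<beta>)" using \<beta>J v by blast
    have BY: "B \<subseteq> Blk v S" using Bini FY ini_sub_Field by blast
    have BW: "B \<subseteq> Field (fst ?W)" using BY BS by blast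
    have D0F: "D0 \<subseteq> Field (fst p)" using D0 ini_sub_Field by blast
    have FD0: "Field (fst (subw p D0)) = D0" using Field_subw[OF wp D0F] .
    have FB: "Field (fst (subw ?W B)) = B" using Field_subw[OF wW BW] .
    have fD0: "f ` D0 = B" using isoW_Field[OF f] FD0 FB by simp
    have injf: "inj_on f D0" using isoW_inj[OF f] FD0 by simp
    define f' where "f' = inv_into D0 f"
    have f': "isoW f' (subw ?W B) (subw p D0)" using isoW_inv[OF f] FD0 f'_def by simp
    have iniL: "ini (subw ?W B) (L \<beta>)"
      unfolding ini_def FB
    proof (intro conjI ballI allI impI)
      show "L \<beta> \<subseteq> B" by (fact LB)
      fix x y assume x: "x \<in> L \<beta>" and yx: "(y,x) \<in> fst (subw ?W B)"
      have yB: "y \<in> B" and yxW: "(y,x) \<in> fst ?W" using yx by (auto simp: fst_subw)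
      have yS: "y \<in> Blk v S" using yB BY by blast
      have bx: "blk x \<in> S" "(blk x, \<beta>) \<in> J" "blk x \<noteq> \<beta>" using x unfolding L_def by (auto simp: in_Blk)
      have byx: "(blk y, blk x) \<in> J" using rel_wprod_blk[OF yxW J] .
      have "(blk y, \<beta>) \<in> J" using wo_trans[OF J byx bx(2)] .
      moreover have "blk y \<noteq> \<beta>" using wo_antisym[OF J] byx bx by blast
      ultimately show "y \<in> L \<beta>" using yS unfolding L_def by (auto simp: in_Blk)
    qed
    define A where "A = f' ` L \<beta>"
    have iniA': "ini (subw p D0) A" unfolding A_def using isoW_ini[OF f' iniL] .
    have iniA: "ini p A" using ini_trans[OF D0 iniA'] .
    have AD0: "A \<subseteq> D0" using iniA' FD0 ini_sub_Field by blast
    have fA: "f ` A = L \<beta>" unfolding A_def f'_def using image_inv_into_cancel[OF fD0 LB] by blast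
    have fD0A: "f ` (D0 - A) = B - L \<beta>" using inj_on_image_set_diff[OF injf, of D0 A] AD0 fD0 fA by auto
    have AneF: "A \<noteq> Field (fst p)"
      using cont
    proof
      assume c: "D0 = Field (fst p) \<and> B - L \<beta> \<noteq> {}"
      then obtain d where "d \<in> D0 - A" using fD0A by blast
      then show ?thesis using c by blast
    next
      assume "\<exists>a D. D0 = usw p a \<and> a \<in> Field (fst p) \<and> D \<in> Blk v {\<beta>} \<and> B = usw ?Y D \<and> snd p a < snd ?W D"
      then obtain a where "D0 = usw p a" "a \<in> Field (fst p)" by blast
      then show ?thesis using AD0 by (auto simp: usw_def)
    qed
    let ?s = "subw p (Field (fst p) - A)"
    have ps: "lex_le p ?s" using suf iniA AneF by blast
    have ws: "wword ?s" using wword_subw[OF wp] .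
    have i1: "isoW f (subw p (D0 - A)) (subw ?W (B - L \<beta>))"
    proof -
      have "isoW f (subw (subw p D0) (D0 - A)) (subw (subw ?W B) (f ` (D0 - A)))"
        using isoW_rest2[OF wword_subw[OF wp] f] FD0 by simp
      then show ?thesis using fD0A by (simp add: subw_subw Int_absorb1 Diff_subset Int_Diff)
    qed
    have pi: "isoW pos (subw ?W (Blk v {\<beta>})) (v \<beta>)" using block_iso[OF J vw wW \<beta>J] .
    have Bb: "Blk v {\<beta>} \<subseteq> Field (fst ?W)" using BS \<beta> Blk_mono[of "{\<beta>}" S v] by blast
    have FBb: "Field (fst (subw ?W (Blk v {\<beta>}))) = Blk v {\<beta>}" using Field_subw[OF wW Bb] .
    have i2: "isoW pos (subw ?W (B - L \<beta>)) (subw (v \<beta>) (pos ` (B - L \<beta>)))"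
    proof -
      have "isoW pos (subw (subw ?W (Blk v {\<beta>})) (B - L \<beta>)) (subw (v \<beta>) (pos ` (B - L \<beta>)))"
        using isoW_rest2[OF wword_subw[OF wW] pi] FBb BL by simp
      then show ?thesis using BL by (simp add: subw_subw Int_absorb1)
    qed
    have i12: "isoW (pos \<circ> f) (subw p (D0 - A)) (subw (v \<beta>) (pos ` (B - L \<beta>)))" using isoW_comp[OF i1 i2] .
    have "lex_le ?s (v \<beta>)"
      using cont
    proof
      assume c: "D0 = Field (fst p) \<and> B - L \<beta> \<noteq> {}"
      have iniBL: "ini (subw ?W (Blk v {\<beta>})) (B - L \<beta>)"
        unfolding ini_def FBb
      proof (intro conjI ballI allI impI)
        show "B - L \<beta> \<subseteq> Blk v {\<beta>}" by (fact BL)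
        fix x y assume x: "x \<in> B - L \<beta>" and yx: "(y,x) \<in> fst (subw ?W (Blk v {\<beta>}))"
        have yb: "y \<in> Blk v {\<beta>}" and yxW: "(y,x) \<in> fst ?W" using yx by (auto simp: fst_subw)
        have yS: "y \<in> Blk v S" using yb \<beta> Blk_mono[of "{\<beta>}" S v] by blast
        have "(y,x) \<in> fst ?Y" using yS x BY yxW relY by blast
        then have "y \<in> B" using Bini x unfolding ini_def by blast
        moreover have "y \<notin> L \<beta>" using yb unfolding L_def by (auto simp: in_Blk)
        ultimately show "y \<in> B - L \<beta>" by blast
      qed
      have "ini (v \<beta>) (pos ` (B - L \<beta>))" using isoW_ini[OF pi iniBL] .
      then have "PREp ?s (v \<beta>)" unfolding PREp_def using i12 c by auto
      then show ?thesis using PRE_lex[OF ws wv] by blast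
    next
      assume "\<exists>a D. D0 = usw p a \<and> a \<in> Field (fst p) \<and> D \<in> Blk v {\<beta>} \<and> B = usw ?Y D \<and> snd p a < snd ?W D"
      then obtain a D where aD: "D0 = usw p a" "a \<in> Field (fst p)" "D \<in> Blk v {\<beta>}" "B = usw ?Y D" "snd p a < snd ?W D"
        by blast
      have aA: "a \<notin> A" using AD0 aD(1) by (auto simp: usw_def)
      have Fs: "Field (fst ?s) = Field (fst p) - A" using Field_subw[OF wp] by blast
      have as: "a \<in> Field (fst ?s)" using Fs aD(2) aA by blast
      have "usw ?s a = usw p a \<inter> (Field (fst p) - A)" using aD(2) aA by (simp add: usw_subw)
      then have us: "usw ?s a = D0 - A" using aD(1) usw_sub_Field[of p a] by blast
      have sub1: "subw ?s (usw ?s a) = subw p (D0 - A)" using us D0F by (simp add: subw_subw Int_absorb1 Diff_mono)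
      have BLeq: "B - L \<beta> = usw (subw ?W (Blk v {\<beta>})) D"
      proof
        show "B - L \<beta> \<subseteq> usw (subw ?W (Blk v {\<beta>})) D"
        proof
          fix x assume x: "x \<in> B - L \<beta>"
          then have "x \<in> Blk v {\<beta>}" "(x,D) \<in> fst ?W" "x \<noteq> D" using BL aD(4) by (auto simp: usw_def fst_subw)
          then show "x \<in> usw (subw ?W (Blk v {\<beta>})) D" using aD(3) by (auto simp: usw_def fst_subw)
        qed
        show "usw (subw ?W (Blk v {\<beta>})) D \<subseteq> B - L \<beta>"
        proof
          fix x assume x: "x \<in> usw (subw ?W (Blk v {\<beta>})) D"
          then have xb: "x \<in> Blk v {\<beta>}" and xD: "(x,D) \<in> fst ?W" "x \<noteq> D" by (auto simp: usw_def fst_subw)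
          have "x \<in> Blk v S" "D \<in> Blk v S" using xb aD(3) \<beta> Blk_mono[of "{\<beta>}" S v] by blast+
          then have "x \<in> B" using aD(4) xD by (auto simp: usw_def fst_subw)
          moreover have "x \<notin> L \<beta>" using xb unfolding L_def by (auto simp: in_Blk)
          ultimately show "x \<in> B - L \<beta>" by blast
        qed
      qed
      have posD: "pos ` (B - L \<beta>) = usw (v \<beta>) (pos D)"
        using isoW_usw[OF pi] FBb aD(3) BLeq by simp
      have pDF: "pos D \<in> Field (fst (v \<beta>))" using aD(3) by (auto simp: in_Blk)
      have lab: "snd ?s a < snd (v \<beta>) (pos D)" using aD(3,5) by (auto simp: snd_wprod in_Blk)
      have "STRp ?s (v \<beta>)" unfolding STRp_def
        using as pDF lab i12 sub1 posD by metis
      then show ?thesis using STR_lex[OF ws wv] by blast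
    qed
    then have "lex_le p (v \<beta>)" using lex_trans[OF wp ws wv ps] by blast
    then show False using small \<beta> by blast
  qed
  have "PREp p ?Y \<or> STRp p ?Y" using le lex_le_iff[OF wp wY] by blast
  then show ?thesis
  proof
    assume "PREp p ?Y"
    then obtain B f where Bf: "ini ?Y B" "isoW f p (subw ?Y B)" unfolding PREp_def by blast
    have BY: "B \<subseteq> Blk v S" using Bf(1) FY ini_sub_Field by blast
    have sYB: "subw ?Y B = subw ?W B" using BY by (simp add: subw_subw Int_absorb1)
    define T where "T = {\<beta>\<in>S. Blk v {\<beta>} \<subseteq> B}"
    have TB: "Blk v T \<subseteq> B"
    proof
      fix x assume "x \<in> Blk v T"
      then have "x \<in> Blk v {blk x}" "Blk v {blk x} \<subseteq> B" unfolding T_def by (auto simp: in_Blk)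
      then show "x \<in> B" by blast
    qed
    show ?thesis
    proof (cases "B = Blk v T")
      case True
      have dc: "\<forall>\<beta>\<in>T. \<forall>\<beta>'\<in>S. (\<beta>',\<beta>) \<in> J \<longrightarrow> \<beta>' \<in> T"
      proof (intro ballI impI)
        fix \<beta> \<beta>' assume b: "\<beta> \<in> T" "\<beta>' \<in> S" "(\<beta>',\<beta>) \<in> J"
        show "\<beta>' \<in> T"
        proof (cases "\<beta>' = \<beta>")
          case True then show ?thesis using b by simp
        next
          case False
          have bS: "\<beta> \<in> S" using b unfolding T_def by blast
          obtain q where q: "q \<in> Field (fst (v \<beta>))" using v bS S by blast
          have eB: "prod_encode (\<beta>, q) \<in> B" using b q unfolding T_def by (auto simp: in_Blk)
          have "Blk v {\<beta>'} \<subseteq> B"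
          proof
            fix x assume x: "x \<in> Blk v {\<beta>'}"
            have "x \<in> Blk v S" using x b(2) by (auto simp: in_Blk)
            moreover have "prod_encode (\<beta>, q) \<in> Blk v S" using bS q by (simp add: in_Blk)
            moreover have "(x, prod_encode (\<beta>, q)) \<in> fst ?W"
              using x b q False S bS by (intro rel_wprod_lt) (auto simp: in_Blk)
            ultimately have "(x, prod_encode (\<beta>, q)) \<in> fst ?Y" using relY by blast
            then show "x \<in> B" using Bf(1) eB unfolding ini_def by blast
          qed
          then show ?thesis using b unfolding T_def by blast
        qed
      qed
      have "T \<subseteq> S" unfolding T_def by blast
      moreover have "p \<simeq>w subw ?W (Blk v T)" using Bf(2) sYB True word_iso_iff by metis
      ultimately show ?thesis using dc by blast
    next
      case False
      then obtain E where E: "E \<in> B" "E \<notin> Blk v T" using TB by blast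
      define \<beta> where "\<beta> = blk E"
      have ES: "E \<in> Blk v S" using E BY by blast
      have \<beta>S: "\<beta> \<in> S" using ES unfolding \<beta>_def by (simp add: in_Blk)
      have Eb: "E \<in> Blk v {\<beta>}" using ES unfolding \<beta>_def by (simp add: in_Blk)
      have "\<beta> \<notin> T" using E Eb unfolding T_def by (auto simp: in_Blk)
      then obtain e' where e': "e' \<in> Blk v {\<beta>}" "e' \<notin> B" using \<beta>S unfolding T_def by blast
      have e'S: "e' \<in> Blk v S" using e' \<beta>S by (auto simp: in_Blk)
      have LB: "L \<beta> \<subseteq> B"
      proof
        fix x assume x: "x \<in> L \<beta>"
        have xS: "x \<in> Blk v S" using x unfolding L_def by (auto simp: in_Blk)
        have "(x, E) \<in> fst ?W" using x Eb S \<beta>S unfolding L_def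
          by (intro rel_wprod_lt) (auto simp: in_Blk)
        then have "(x, E) \<in> fst ?Y" using relY xS ES by blast
        then show "x \<in> B" using Bf(1) E unfolding ini_def by blast
      qed
      have BL: "B - L \<beta> \<subseteq> Blk v {\<beta>}"
      proof
        fix x assume x: "x \<in> B - L \<beta>"
        have xS: "x \<in> Blk v S" using x BY by blast
        show "x \<in> Blk v {\<beta>}"
        proof (rule ccontr)
          assume nb: "x \<notin> Blk v {\<beta>}"
          then have ne: "blk x \<noteq> \<beta>" using xS by (auto simp: in_Blk)
          have "(blk x, \<beta>) \<notin> J" using x xS ne unfolding L_def by (auto simp: in_Blk)
          moreover have "blk x \<in> Field J" "\<beta> \<in> Field J" using xS \<beta>S S by (auto simp: in_Blk)
          ultimately have "(\<beta>, blk x) \<in> J" using wo_total[OF J] by blast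
          then have "(e', x) \<in> fst ?W" using e' xS ne S \<beta>S
            by (intro rel_wprod_lt) (auto simp: in_Blk)
          then have "(e', x) \<in> fst ?Y" using relY xS e'S by blast
          then have "e' \<in> B" using Bf(1) x unfolding ini_def by blast
          then show False using e' by blast
        qed
      qed
      have EL: "E \<notin> L \<beta>" unfolding L_def \<beta>_def by (auto simp: in_Blk)
      have f0: "isoW f (subw p (Field (fst p))) (subw ?W B)" using Bf(2) sYB by (simp add: subw_Field)
      show ?thesis using gen[OF f0 ini_Field Bf(1) \<beta>S LB BL] E EL by blast
    qed
  next
    assume "STRp p ?Y"
    then obtain a D f where aDf: "a \<in> Field (fst p)" "D \<in> Field (fst ?Y)"
      "isoW f (subw p (usw p a)) (subw ?Y (usw ?Y D))" "snd p a < snd ?Y D"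
      unfolding STRp_def by blast
    have DS: "D \<in> Blk v S" using aDf(2) FY by simp
    define B where "B = usw ?Y D"
    define \<beta> where "\<beta> = blk D"
    have BY: "B \<subseteq> Blk v S" unfolding B_def using usw_sub_Field FY by blast
    have sYB: "subw ?Y B = subw ?W B" using BY by (simp add: subw_subw Int_absorb1)
    have \<beta>S: "\<beta> \<in> S" using DS unfolding \<beta>_def by (simp add: in_Blk)
    have Db: "D \<in> Blk v {\<beta>}" using DS unfolding \<beta>_def by (simp add: in_Blk)
    have LB: "L \<beta> \<subseteq> B"
    proof
      fix x assume x: "x \<in> L \<beta>"
      have xS: "x \<in> Blk v S" using x unfolding L_def by (auto simp: in_Blk)
      have "(x, D) \<in> fst ?W" using x Db S \<beta>S unfolding L_def
        by (intro rel_wprod_lt) (auto simp: in_Blk)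
      then have "(x, D) \<in> fst ?Y" using relY xS DS by blast
      moreover have "x \<noteq> D" using x Db unfolding L_def by (auto simp: in_Blk)
      ultimately show "x \<in> B" unfolding B_def usw_def by blast
    qed
    have BL: "B - L \<beta> \<subseteq> Blk v {\<beta>}"
    proof
      fix x assume x: "x \<in> B - L \<beta>"
      have xS: "x \<in> Blk v S" using x BY by blast
      have "(x, D) \<in> fst ?W" using x unfolding B_def usw_def by (auto simp: fst_subw)
      then have bxb: "(blk x, \<beta>) \<in> J" unfolding \<beta>_def using rel_wprod_blk[OF _ J] by blast
      show "x \<in> Blk v {\<beta>}"
      proof (rule ccontr)
        assume "x \<notin> Blk v {\<beta>}"
        then have "blk x \<noteq> \<beta>" using xS by (auto simp: in_Blk)
        then have "x \<in> L \<beta>" using xS bxb unfolding L_def by (auto simp: in_Blk)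
        then show False using x by blast
      qed
    qed
    have f0: "isoW f (subw p (usw p a)) (subw ?W B)" using aDf(3) sYB unfolding B_def by simp
    have lab: "snd p a < snd ?W D" using aDf(4) by simp
    show ?thesis using gen[OF f0 usw_ini[OF wp] usw_ini[OF wY, of D, folded B_def] \<beta>S LB BL] aDf(1) Db lab
      unfolding B_def by blast
  qed
qed



definition SUF :: "('a::linorder) word \<Rightarrow> bool" where
  "SUF p \<longleftrightarrow> (\<forall>A. ini p A \<and> A \<noteq> Field (fst p) \<longrightarrow> lex_le p (subw p (Field (fst p) - A)))"

lemma prime_wword: "prime_word x \<Longrightarrow> wword x"
  unfolding prime_word_def primitive_def by blast

lemma prime_SUF:
  assumes pr: "prime_word x" shows "SUF x"
  unfolding SUF_def
proof (intro allI impI)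
  fix A assume A: "ini x A \<and> A \<noteq> Field (fst x)"
  have wx: "wword x" using prime_wword[OF pr] .
  have AF: "A \<subseteq> Field (fst x)" using A ini_sub_Field by blast
  show "lex_le x (subw x (Field (fst x) - A))"
  proof (cases "A = {}")
    case True
    then show ?thesis using lex_refl[OF wx] by (simp add: subw_Field)
  next
    case False
    have c: "x \<simeq>w (subw x A \<cdot>w subw x (Field (fst x) - A))"
      using conc_iff[OF wx] A word_iso_refl by blast
    have "Field (fst (subw x A)) \<noteq> {}" using Field_subw[OF wx AF] False by simp
    moreover have "Field (fst (subw x (Field (fst x) - A))) \<noteq> {}" using Field_subw[OF wx] A AF by auto
    ultimately show ?thesis using pr c wword_subw[OF wx] unfolding prime_word_def by blast
  qed
qed

lemma SUF_transport:
  assumes wp: "wword p" and wq: "wword q" and s: "SUF p" and f: "isoW f p q"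
    and A': "ini q A'" "A' \<noteq> Field (fst q)"
  shows "lex_le p (subw q (Field (fst q) - A'))"
proof -
  define g where "g = inv_into (Field (fst p)) f"
  have g: "isoW g q p" using isoW_inv[OF f] g_def by simp
  have bf: "bij_betw f (Field (fst p)) (Field (fst q))" using f unfolding isoW_def by blast
  have A'F: "A' \<subseteq> Field (fst q)" using A' ini_sub_Field by blast
  let ?A = "g ` A'"
  have iA: "ini p ?A" using isoW_ini[OF g A'(1)] .
  have AF: "?A \<subseteq> Field (fst p)" using iA ini_sub_Field by blast
  have fim: "f ` Field (fst p) = Field (fst q)" using bf by (simp add: bij_betw_def)
  have fA: "f ` ?A = A'" unfolding g_def using image_inv_into_cancel[OF fim A'F] by blast
  have fD: "f ` (Field (fst p) - ?A) = Field (fst q) - A'"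
    using inj_on_image_set_diff[of f "Field (fst p)" "Field (fst p)" ?A] bf fA AF fim by (auto simp: bij_betw_def)
  have ne: "?A \<noteq> Field (fst p)" using fA bf A'(2) by (auto simp: bij_betw_def)
  have l: "lex_le p (subw p (Field (fst p) - ?A))" using s iA ne unfolding SUF_def by blast
  have "isoW f (subw p (Field (fst p) - ?A)) (subw q (Field (fst q) - A'))"
    using isoW_rest2[OF wp f, of "Field (fst p) - ?A"] fD by auto
  then have "subw p (Field (fst p) - ?A) \<simeq>w subw q (Field (fst q) - A')" using word_iso_iff by blast
  then show ?thesis using lex_iso_right[OF wp wword_subw[OF wp] wword_subw[OF wq] _ l] by blast
qed

lemma Field_Restr_wo: "Well_order I \<Longrightarrow> T \<subseteq> Field I \<Longrightarrow> Field (Restr I T) = T"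
proof
  show "Field (Restr I T) \<subseteq> T" by (auto simp: Field_def)
  assume "Well_order I" "T \<subseteq> Field I"
  then show "T \<subseteq> Field (Restr I T)"
    by (auto intro: FieldI1 dest: wo_refl)
qed

lemma iso_ne: "isoW f x y \<Longrightarrow> Field (fst x) \<noteq> {} \<Longrightarrow> Field (fst y) \<noteq> {}"
  using isoW_Field by blast



theorem mainTheorem17:
  fixes I :: "nat rel" and u :: "nat \<Rightarrow> ('a::{finite,linorder}) word"
  assumes "Well_order I"
    and "\<forall>i\<in>Field I. prime_word (u i)"
    and "\<forall>i\<in>Field I. \<forall>j\<in>Field I. (i, j) \<in> I \<and> i \<noteq> j \<longrightarrow> lex_le (u j) (u i)"
    and "\<exists>i\<in>Field I. \<exists>j\<in>Field I. i \<noteq> j"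
  shows "\<not> prime_word (wprod I u)"
proof
  assume pw: "prime_word (wprod I u)"
  note I = assms(1)
  let ?w = "wprod I u"
  have ww: "wword ?w" using prime_wword[OF pw] .
  have primw: "primitive ?w" using pw unfolding prime_word_def by blast
  have sufw: "SUF ?w" using prime_SUF[OF pw] .
  have uw: "\<forall>i\<in>Field I. wword (u i)" using assms(2) prime_wword by blast
  have une: "\<forall>i\<in>Field I. Field (fst (u i)) \<noteq> {}"
    using assms(2) primitive_ne unfolding prime_word_def by blast
  have uv: "\<forall>i\<in>Field I. wword (u i) \<and> Field (fst (u i)) \<noteq> {}" using uw une by blast
  have FW: "Field (fst ?w) = Blk u (Field I)" using Field_wprod[OF I uw] .
  obtain i0 where i0: "i0 \<in> Field I" using assms(4) by blast
  have wfI: "wf (I - Id)" using wo_wf[OF I] .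
  obtain z where z: "z \<in> Field I" and zmin: "\<And>y. (y, z) \<in> I - Id \<Longrightarrow> y \<notin> Field I"
    by (rule wfE_min[OF wfI i0]) blast
  have zle: "\<And>i. i \<in> Field I \<Longrightarrow> (z, i) \<in> I"
    using wo_total[OF I] zmin z by blast
  let ?u0 = "u z"
  have wu0: "wword ?u0" using uw z by blast
  have primu0: "primitive ?u0" using assms(2) z unfolding prime_word_def by blast
  have sufu0: "SUF ?u0" using prime_SUF assms(2) z by blast
  show False
  proof (cases "\<forall>i\<in>Field I. u i \<simeq>w ?u0")
    case True
    have "?w \<simeq>w wprod I (\<lambda>_. ?u0)"
      using wprod_pointwise_iso[OF I uw, of "\<lambda>_. ?u0"] True wu0 by simp
    then have "?w \<simeq>w wpow ?u0 I" unfolding wpow_def .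
    then have "card (Field I) = 1" using primw wu0 I unfolding primitive_def by blast
    then obtain x where "Field I = {x}" using card_1_singletonE by blast
    then show False using assms(4) by auto
  next
    case False
    then obtain \<gamma> where \<gamma>: "\<gamma> \<in> Field I" "\<not> u \<gamma> \<simeq>w ?u0" by blast
    have z\<gamma>: "z \<noteq> \<gamma>" using \<gamma> word_iso_refl by blast
    have wu\<gamma>: "wword (u \<gamma>)" using uw \<gamma> by blast
    define S where "S = {\<beta>\<in>Field I. (\<gamma>, \<beta>) \<in> I}"
    have SF: "S \<subseteq> Field I" unfolding S_def by blast
    have \<gamma>S: "\<gamma> \<in> S" unfolding S_def using \<gamma> wo_refl[OF I] by blast
    have small: "\<forall>\<beta>\<in>S. \<not> lex_le ?u0 (u \<beta>)"
    proof (intro ballI notI)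
      fix \<beta> assume \<beta>: "\<beta> \<in> S" and l: "lex_le ?u0 (u \<beta>)"
      have \<beta>F: "\<beta> \<in> Field I" using \<beta> SF by blast
      have wb: "wword (u \<beta>)" using uw \<beta>F by blast
      have l1: "lex_le (u \<gamma>) ?u0" using assms(3) z \<gamma> zle z\<gamma> by blast
      have l2: "lex_le (u \<beta>) (u \<gamma>)"
      proof (cases "\<beta> = \<gamma>")
        case True then show ?thesis using lex_refl wu\<gamma> by simp
      next
        case False then show ?thesis using assms(3) \<beta> \<gamma> unfolding S_def by blast
      qed
      have "lex_le ?u0 (u \<gamma>)" using lex_trans[OF wu0 wb wu\<gamma> l l2] .
      then have "?u0 \<simeq>w u \<gamma>" using lex_antisym[OF wu0 wu\<gamma> _ l1] by blast
      then show False using \<gamma> word_iso_sym by blast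
    qed
    have le0: "lex_le ?u0 (subw ?w (Blk u S))"
    proof -
      have iz: "ini ?w (Blk u {z})"
      proof -
        have "ini (subw ?w (Blk u (Field I))) (Blk u {z})"
          by (rule ini_Blk[OF I uw ww]) (use z zle wo_antisym[OF I] in auto)
        then show ?thesis using FW subw_Field by metis
      qed
      have "isoW pos (subw ?w (Blk u {z})) ?u0" using block_iso[OF I uw ww z] .
      then have "?u0 \<simeq>w subw ?w (Blk u {z})" using word_iso_iff word_iso_sym by blast
      then have a: "lex_le ?u0 ?w" using PRE_lex[OF wu0 ww] iz word_iso_iff unfolding PREp_def by blast
      define A where "A = Blk u (Field I - S)"
      have iA: "ini ?w A"
      proof -
        have "ini (subw ?w (Blk u (Field I))) A" unfolding A_def
          by (rule ini_Blk[OF I uw ww]) (auto simp: S_def dest: wo_trans[OF I])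
        then show ?thesis using FW subw_Field by metis
      qed
      obtain q where q: "q \<in> Field (fst (u \<gamma>))" using une \<gamma> by blast
      have "prod_encode (\<gamma>, q) \<in> Field (fst ?w)" using FW q \<gamma> by (simp add: in_Blk)
      moreover have "prod_encode (\<gamma>, q) \<notin> A" using \<gamma>S unfolding A_def by (simp add: in_Blk)
      ultimately have Ane: "A \<noteq> Field (fst ?w)" by blast
      have "Field (fst ?w) - A = Blk u S" unfolding FW A_def Blk_Diff using SF by (simp add: Diff_Diff_Int Int_absorb1)
      then have b: "lex_le ?w (subw ?w (Blk u S))" using sufw iA Ane unfolding SUF_def by metis
      show ?thesis using lex_trans[OF wu0 ww wword_subw[OF ww] a b] .
    qed
    obtain T where T: "T \<subseteq> S" "\<forall>\<beta>\<in>T. \<forall>\<beta>'\<in>S. (\<beta>',\<beta>) \<in> I \<longrightarrow> \<beta>' \<in> T" "?u0 \<simeq>w subw ?w (Blk u T)"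
      using M[OF I uv ww SF wu0 sufu0[unfolded SUF_def] small le0] by blast
    have TF: "T \<subseteq> Field I" using T SF by blast
    let ?q0 = "subw ?w (Blk u T)"
    have wq0: "wword ?q0" using wword_subw[OF ww] .
    have BTF: "Blk u T \<subseteq> Field (fst ?w)" using FW TF Blk_mono by blast
    have Fq0: "Field (fst ?q0) = Blk u T" using Field_subw[OF ww BTF] .
    obtain f0 where f0: "isoW f0 ?u0 ?q0" using T(3) word_iso_iff by blast
    have C1: "lex_le ?u0 (subw ?w (Blk u {\<beta>\<in>T. (\<eta>, \<beta>) \<in> I}))" if \<eta>: "\<eta> \<in> T" for \<eta>
    proof -
      define A' where "A' = Blk u {\<beta>\<in>T. (\<eta>, \<beta>) \<notin> I}"
      have iA': "ini ?q0 A'" unfolding A'_def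
        by (rule ini_Blk[OF I uw ww TF]) (auto dest: wo_trans[OF I])
      have \<eta>F: "\<eta> \<in> Field I" using \<eta> TF by blast
      obtain q where q: "q \<in> Field (fst (u \<eta>))" using une \<eta>F by blast
      have "prod_encode (\<eta>, q) \<in> Blk u T" using q \<eta> by (simp add: in_Blk)
      moreover have "prod_encode (\<eta>, q) \<notin> A'" using wo_refl[OF I \<eta>F] unfolding A'_def by (simp add: in_Blk)
      ultimately have ne: "A' \<noteq> Field (fst ?q0)" using Fq0 by blast
      have "Field (fst ?q0) - A' = Blk u {\<beta>\<in>T. (\<eta>, \<beta>) \<in> I}" unfolding Fq0 A'_def Blk_Diff
        by (rule arg_cong[where f = "Blk u"]) blast
      moreover have "Blk u T \<inter> Blk u {\<beta>\<in>T. (\<eta>, \<beta>) \<in> I} = Blk u {\<beta>\<in>T. (\<eta>, \<beta>) \<in> I}"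
        using Blk_mono[of "{\<beta>\<in>T. (\<eta>, \<beta>) \<in> I}" T u] by blast
      ultimately show ?thesis using SUF_transport[OF wu0 wq0 sufu0 f0 iA' ne] by (simp add: subw_subw)
    qed
    have C2: "\<exists>C. ini ?u0 C \<and> subw ?u0 C \<simeq>w u \<eta> \<and> C \<noteq> Field (fst ?u0)" if \<eta>: "\<eta> \<in> T" for \<eta>
    proof -
      let ?R = "{\<beta>\<in>T. (\<eta>, \<beta>) \<in> I}"
      have RS: "?R \<subseteq> S" using T by blast
      have RF: "?R \<subseteq> Field I" using TF by blast
      obtain T' where T': "T' \<subseteq> ?R" "\<forall>\<beta>\<in>T'. \<forall>\<beta>'\<in>?R. (\<beta>',\<beta>) \<in> I \<longrightarrow> \<beta>' \<in> T'" "?u0 \<simeq>w subw ?w (Blk u T')"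
        using M[OF I uv ww RF wu0 sufu0[unfolded SUF_def] _ C1[OF \<eta>]] small RS by blast
      have T'F: "T' \<subseteq> Field I" using T' RF by blast
      have BT'F: "Blk u T' \<subseteq> Field (fst ?w)" using FW T'F Blk_mono by blast
      obtain g where g: "isoW g ?u0 (subw ?w (Blk u T'))" using T'(3) word_iso_iff by blast
      have "Field (fst (subw ?w (Blk u T'))) \<noteq> {}" using iso_ne[OF g] une z by blast
      then have "T' \<noteq> {}" using Field_subw[OF ww BT'F] by auto
      then obtain \<beta> where \<beta>: "\<beta> \<in> T'" by blast
      have \<eta>F: "\<eta> \<in> Field I" using \<eta> TF by blast
      have \<eta>T': "\<eta> \<in> T'" using T'(2) \<beta> T'(1) \<eta> wo_refl[OF I \<eta>F] by blast
      have ib: "ini (subw ?w (Blk u T')) (Blk u {\<eta>})"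
        by (rule ini_Blk[OF I uw ww T'F]) (use \<eta>T' T'(1) wo_antisym[OF I] in auto)
      define g' where "g' = inv_into (Field (fst ?u0)) g"
      have g': "isoW g' (subw ?w (Blk u T')) ?u0" using isoW_inv[OF g] g'_def by simp
      let ?C = "g' ` Blk u {\<eta>}"
      have iC: "ini ?u0 ?C" using isoW_ini[OF g' ib] .
      have bsub: "Blk u {\<eta>} \<subseteq> Blk u T'" using \<eta>T' Blk_mono by blast
      have FT': "Field (fst (subw ?w (Blk u T'))) = Blk u T'" using Field_subw[OF ww BT'F] .
      have "isoW g' (subw (subw ?w (Blk u T')) (Blk u {\<eta>})) (subw ?u0 ?C)"
        using isoW_rest2[OF wword_subw[OF ww] g'] bsub FT' by simp
      then have "isoW g' (subw ?w (Blk u {\<eta>})) (subw ?u0 ?C)" using bsub by (simp add: subw_subw Int_absorb1)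
      moreover have "isoW pos (subw ?w (Blk u {\<eta>})) (u \<eta>)" using block_iso[OF I uw ww \<eta>F] .
      ultimately have iso: "subw ?u0 ?C \<simeq>w u \<eta>" using word_iso_iff word_iso_sym word_iso_trans by meson
      have wu\<eta>: "wword (u \<eta>)" using uw \<eta>F by blast
      have "?C \<noteq> Field (fst ?u0)"
      proof
        assume "?C = Field (fst ?u0)"
        then have "?u0 \<simeq>w u \<eta>" using iso by (simp add: subw_Field)
        then have "lex_le ?u0 (u \<eta>)" using PRE_lex[OF wu0 wu\<eta>] wiso_PRE[OF wu\<eta>] by blast
        then show False using small \<eta> T(1) by blast
      qed
      then show ?thesis using iC iso by blast
    qed
    obtain C where C: "\<And>\<eta>. \<eta> \<in> T \<Longrightarrow> ini ?u0 (C \<eta>) \<and> subw ?u0 (C \<eta>) \<simeq>w u \<eta> \<and> C \<eta> \<noteq> Field (fst ?u0)"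
      using C2 by metis
    have mono: "C \<eta>' \<subseteq> C \<eta>" if \<eta>: "\<eta> \<in> T" "\<eta>' \<in> T" "(\<eta>, \<eta>') \<in> I" for \<eta> \<eta>'
    proof (cases "\<eta> = \<eta>'")
      case True then show ?thesis by simp
    next
      case ne: False
      have \<eta>F: "\<eta> \<in> Field I" "\<eta>' \<in> Field I" using \<eta> TF by blast+
      have w1: "wword (u \<eta>)" "wword (u \<eta>')" using uw \<eta>F by blast+
      have ws1: "wword (subw ?u0 (C \<eta>))" "wword (subw ?u0 (C \<eta>'))" using wword_subw[OF wu0] by blast+
      have "C \<eta> \<subseteq> C \<eta>' \<or> C \<eta>' \<subseteq> C \<eta>" using ini_chain[OF wu0] C \<eta> by blast
      then show ?thesis
      proof
        assume sub: "C \<eta> \<subseteq> C \<eta>'"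
        have CF: "C \<eta>' \<subseteq> Field (fst ?u0)" using C \<eta>(2) ini_sub_Field by blast
        have "ini (subw ?u0 (C \<eta>')) (C \<eta>)" using ini_in_subw[OF _ sub wu0 CF] C \<eta>(1) by blast
        moreover have "subw (subw ?u0 (C \<eta>')) (C \<eta>) = subw ?u0 (C \<eta>)" using sub by (simp add: subw_subw Int_absorb1)
        ultimately have "PREp (subw ?u0 (C \<eta>)) (subw ?u0 (C \<eta>'))" unfolding PREp_def using isoW_id by metis
        then have l: "lex_le (subw ?u0 (C \<eta>)) (subw ?u0 (C \<eta>'))" using PRE_lex ws1 by blast
        have l1: "lex_le (subw ?u0 (C \<eta>)) (u \<eta>')" using lex_iso_right[OF ws1(1) ws1(2) w1(2) _ l] C \<eta> by blast
        have l2: "lex_le (u \<eta>) (u \<eta>')" using lex_iso_left[OF ws1(1) w1(1) w1(2) _ l1] C \<eta> word_iso_sym by blast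
        have l3: "lex_le (u \<eta>') (u \<eta>)" using assms(3) \<eta>F \<eta>(3) ne by blast
        have "u \<eta> \<simeq>w u \<eta>'" using lex_antisym[OF w1 l2 l3] .
        then have "subw ?u0 (C \<eta>) \<simeq>w subw ?u0 (C \<eta>')" using C \<eta> word_iso_sym word_iso_trans by metis
        then have "C \<eta> = C \<eta>'" using rigid[OF wu0] C \<eta> word_iso_iff by metis
        then show ?thesis by simp
      qed
    qed
    have "\<forall>\<eta>\<in>T. \<exists>d. d \<in> Field (fst ?u0) - C \<eta> \<and> C \<eta> = usw ?u0 d"
    proof
      fix \<eta> assume "\<eta> \<in> T"
      then have "ini ?u0 (C \<eta>)" "C \<eta> \<noteq> Field (fst ?u0)" using C by blast+
      then show "\<exists>d. d \<in> Field (fst ?u0) - C \<eta> \<and> C \<eta> = usw ?u0 d" using ini_proper[OF wu0] by blast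
    qed
    then obtain c where c: "\<And>\<eta>. \<eta> \<in> T \<Longrightarrow> c \<eta> \<in> Field (fst ?u0) - C \<eta> \<and> C \<eta> = usw ?u0 (c \<eta>)"
      using bchoice by metis
    have "Field (fst (subw ?w (Blk u T))) \<noteq> {}" using iso_ne[OF f0] une z by blast
    then have "T \<noteq> {}" using Fq0 by auto
    then obtain \<eta>1 where \<eta>1: "\<eta>1 \<in> T" by blast
    have wfu: "wf (fst ?u0 - Id)" using wo_wf wu0 unfolding wword_def by blast
    have "c \<eta>1 \<in> c ` T" using \<eta>1 by blast
    then obtain m where m: "m \<in> c ` T" and mmin: "\<And>y. (y, m) \<in> fst ?u0 - Id \<Longrightarrow> y \<notin> c ` T"
      by (rule wfE_min[OF wfu]) blast
    then obtain \<eta>0 where \<eta>0: "\<eta>0 \<in> T" "m = c \<eta>0" by blast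
    have \<eta>0F: "\<eta>0 \<in> Field I" using \<eta>0 TF by blast
    have wu\<eta>0: "wword (u \<eta>0)" using uw \<eta>0F by blast
    have const: "u \<eta> \<simeq>w u \<eta>0" if \<eta>: "\<eta> \<in> T" "(\<eta>0, \<eta>) \<in> I" for \<eta>
    proof -
      have s1: "C \<eta> \<subseteq> C \<eta>0" using mono[OF \<eta>0(1) \<eta>(1) \<eta>(2)] .
      have cF: "c \<eta>0 \<in> Field (fst ?u0)" "c \<eta> \<in> Field (fst ?u0)" using c \<eta>0(1) \<eta>(1) by blast+
      have "(c \<eta>, c \<eta>0) \<notin> fst ?u0 - Id" using mmin \<eta>0 \<eta>(1) by blast
      have woU: "Well_order (fst ?u0)" using wu0 unfolding wword_def .
      have cc: "(c \<eta>0, c \<eta>) \<in> fst ?u0"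
      proof (cases "c \<eta> = c \<eta>0")
        case True then show ?thesis using wo_refl[OF woU cF(1)] by simp
      next
        case False
        then have "(c \<eta>, c \<eta>0) \<notin> fst ?u0" using \<open>(c \<eta>, c \<eta>0) \<notin> fst ?u0 - Id\<close> by blast
        then show ?thesis using wo_total[OF woU cF] by blast
      qed
      have s2: "C \<eta>0 \<subseteq> C \<eta>"
      proof
        fix x assume "x \<in> C \<eta>0"
        then have x: "(x, c \<eta>0) \<in> fst ?u0" "x \<noteq> c \<eta>0" using c \<eta>0(1) by (auto simp: usw_def)
        have wo: "Well_order (fst ?u0)" using wu0 unfolding wword_def .
        have "(x, c \<eta>) \<in> fst ?u0" using wo_trans[OF wo x(1) cc] .
        moreover have "x \<noteq> c \<eta>" using wo_antisym[OF wo] x cc by blast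
        ultimately show "x \<in> C \<eta>" using c \<eta>(1) by (auto simp: usw_def)
      qed
      have "C \<eta> = C \<eta>0" using s1 s2 by blast
      then show ?thesis using C \<eta>(1) \<eta>0(1) word_iso_sym word_iso_trans by metis
    qed
    let ?R = "{\<beta>\<in>T. (\<eta>0, \<beta>) \<in> I}"
    have RS: "?R \<subseteq> S" using T by blast
    have RF: "?R \<subseteq> Field I" using TF by blast
    obtain T'' where T'': "T'' \<subseteq> ?R" "?u0 \<simeq>w subw ?w (Blk u T'')"
      using M[OF I uv ww RF wu0 sufu0[unfolded SUF_def] _ C1[OF \<eta>0(1)]] small RS by blast
    have T''F: "T'' \<subseteq> Field I" using T'' RF by blast
    have FR: "Field (Restr I T'') = T''" using Field_Restr_wo[OF I T''F] .
    have woR: "Well_order (Restr I T'')" using Well_order_Restr[OF I] .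
    have e: "subw ?w (Blk u T'') = wprod (Restr I T'') u" using subw_Blk_wprod[OF I T''F] .
    have a1: "\<forall>i\<in>Field (Restr I T''). wword (u i)" using FR uw T''F by blast
    have a2: "\<forall>i\<in>Field (Restr I T''). wword ((\<lambda>_. u \<eta>0) i)" using wu\<eta>0 by simp
    have a3: "\<forall>i\<in>Field (Restr I T''). u i \<simeq>w (\<lambda>_. u \<eta>0) i" using FR const T''(1) by auto
    have "wprod (Restr I T'') u \<simeq>w wprod (Restr I T'') (\<lambda>_. u \<eta>0)"
      using wprod_pointwise_iso[OF woR a1 a2 a3] .
    then have "?u0 \<simeq>w wpow (u \<eta>0) (Restr I T'')" using T''(2) e word_iso_trans unfolding wpow_def by metis
    then have "u \<eta>0 \<simeq>w ?u0" using primu0 wu\<eta>0 woR unfolding primitive_def by blast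
    then have "lex_le ?u0 (u \<eta>0)" using PRE_lex[OF wu0 wu\<eta>0] wiso_PRE[OF wu\<eta>0] word_iso_sym by blast
    then show False using small \<eta>0(1) T(1) by blast
  qed
qed

end
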